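(* Let $R\in(0,\infty)\setminus\{1\}$, $b_1>0$, $b_2>1$, $b_3>0$, and let $m,\ell,O,F$ be as in the context. Then: (1)(a) If $R<1$, then $\ell(q)>m(q)$ for $q\in(0,1]$, and on $(0,\infty)$, $m$ crosses $\ell$ exactly once, from below, at some point greater than $1$. (b) If $R>1$, then $m(q)>\ell(q)$ for $q\in(0,1]$, and on $(0,\infty)$, $m$ either does not cross $\ell$ at all, or touches $\ell$ exactly once in the open interval $(1,R/(R-1))$, or crosses $\ell$ twice in $(1,R/(R-1))$. (2) If $R>1$, $F(q,n)$ is well defined at $q=R/(R-1)$. (3) For $n>0$ with $(1-R)n<(1-R)\ell(1)$, $F(1,n)$ is well defined and $F(1,n)=\lim_{q\to1}F(q,n)=-\frac{(1-R)(n-m(1))}{\ell(1)-n}$. For $q\le1$ and $R<1$, $\lim_{n\uparrow\ell(q)}F(q,n)=-\infty$ (and $\lim_{n\downarrow\ell(q)}F(q,n)=+\infty$ if $R>1$). For $q>1$ when $R<1$ (and for $1<q<R/(R-1)$ when $R>1$), $F(q,\ell(q)):=\lim_{n\to\ell(q)}F(q,n)=-\frac{1-R}{R(1-q)}\left\{\frac{q[(1-R)q+R]}{[(1-R)q+R]^2+(b_2-1)R^2}-1\right\}$. (4) $F(q,n)=0$ if and only if $n=m(q)$. Moreover: (a) for $R<1$: (i) on $0<q<1$, $F(q,n)<0$ for $m(q)<n<\ell(q)$ and $F(q,n)>0$ for $n<m(q)$ or $n>\ell(q)$; (ii) at $q=1$, $F(1,n)<0$ for $m(1)<n<\ell(1)$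 and $F(1,n)>0$ for $n<m(1)$, while $F(1,n)$ is not well defined for $n\ge\ell(1)$; (iii) on $q>1$, $F(q,n)<0$ for $n>m(q)$ and $F(q,n)>0$ for $n<m(q)$; (b) for $R>1$: (i) on $0<q<1$, $F(q,n)>0$ for $\ell(q)<n<m(q)$ and $F(q,n)<0$ for $n<\ell(q)$ or $n>m(q)$; (ii) at $q=1$, $F(1,n)>0$ for $\ell(1)<n<m(1)$ and $F(1,n)<0$ for $n>m(1)$, while $F(1,n)$ is not well defined for $n\le\ell(1)$; (iii) on $1<q\le R/(R-1)$, $F(q,n)<0$ for $n>m(q)$ and $F(q,n)>0$ for $n<m(q)$; (iv) on $q>R/(R-1)$, $F(q,n)<0$ for $m(q)<n<\ell(q)$ and $F(q,n)>0$ for $n>\ell(q)$ or $n<m(q)$.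
   Context: Define $m(q)=\frac{R(1-R)}{b_1}q^2-\frac{b_3(1-R)}{b_1}q+1$, $\ell(q)=m(q)+\frac{1-R}{b_1}q(1-q)+\frac{(b_2-1)R(1-R)}{b_1}\frac{q}{(1-R)q+R}$, $\varphi(q,n)=b_1(n-1)+(1-R)(b_3-2R)q+(2-b_2)R(1-R)$, $E(q)^2=4R^2(1-R)^2(b_2-1)(1-q)^2$, and $O(q,n)=\frac{(1-R)n}{R(1-q)}-\frac{2(1-R)^2qn/R}{2(1-R)(1-q)[(1-R)q+R]-\varphi(q,n)-\mathrm{sgn}(1-R)\sqrt{\varphi(q,n)^2+E(q)^2}}$. Let $\mathcal{S}=\{q=1\}\cup\{q=\frac{R}{R-1}\}\cup\{n=0\}\cup\{q<1,(1-R)n\ge(1-R)\ell(q)\}\subseteq\{(q,n):q>0,n\ge0\}$. On $(0,\infty)\times[0,\infty)\setminus\mathcal{S}$ define $F(q,n)=O(q,n)/n$, and extend $F$ to $(0,\infty)\times[0,\infty)$ where possible by taking limits. *)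

theory Defs
  imports "HOL-Analysis.Analysis"
begin

definition mfun :: "real \<Rightarrow> real \<Rightarrow> real \<Rightarrow> real \<Rightarrow> real \<Rightarrow> real" where
  "mfun R b1 b2 b3 q = R*(1-R)/b1 * q^2 - b3*(1-R)/b1 * q + 1"

definition ellfun :: "real \<Rightarrow> real \<Rightarrow> real \<Rightarrow> real \<Rightarrow> real \<Rightarrow> real" where
  "ellfun R b1 b2 b3 q = mfun R b1 b2 b3 q + (1-R)/b1 * q * (1-q)
      + (b2-1)*R*(1-R)/b1 * (q / ((1-R)*q + R))"

definition phifun :: "real \<Rightarrow> real \<Rightarrow> real \<Rightarrow> real \<Rightarrow> real \<Rightarrow> real \<Rightarrow> real" where
  "phifun R b1 b2 b3 q n = b1*(n-1) + (1-R)*(b3-2*R)*q + (2-b2)*R*(1-R)"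

definition Esq :: "real \<Rightarrow> real \<Rightarrow> real \<Rightarrow> real \<Rightarrow> real \<Rightarrow> real" where
  "Esq R b1 b2 b3 q = 4*R^2*(1-R)^2*(b2-1)*(1-q)^2"

definition Oden :: "real \<Rightarrow> real \<Rightarrow> real \<Rightarrow> real \<Rightarrow> real \<Rightarrow> real \<Rightarrow> real" where
  "Oden R b1 b2 b3 q n = 2*(1-R)*(1-q)*((1-R)*q + R) - phifun R b1 b2 b3 q n
      - sgn (1-R) * sqrt ((phifun R b1 b2 b3 q n)^2 + Esq R b1 b2 b3 q)"

definition Ofun :: "real \<Rightarrow> real \<Rightarrow> real \<Rightarrow> real \<Rightarrow> real \<Rightarrow> real \<Rightarrow> real" where
  "Ofun R b1 b2 b3 q n = (1-R)*n / (R*(1-q))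
      - (2*(1-R)^2*q*n/R) / Oden R b1 b2 b3 q n"

text \<open>The defining formula F = O/n (a total HOL function; only meaningful where
  its denominators are nonzero).\<close>
definition Fform :: "real \<Rightarrow> real \<Rightarrow> real \<Rightarrow> real \<Rightarrow> real \<Rightarrow> real \<Rightarrow> real" where
  "Fform R b1 b2 b3 q n = Ofun R b1 b2 b3 q n / n"

definition Freg :: "real \<Rightarrow> real \<Rightarrow> real \<Rightarrow> real \<Rightarrow> (real \<times> real) set" where
  "Freg R b1 b2 b3 = {(q,n). q > 0 \<and> n > 0 \<and> q \<noteq> 1 \<and> q \<noteq> R/(R-1)
      \<and> Oden R b1 b2 b3 q n \<noteq> 0}"

definition Fext :: "real \<Rightarrow> real \<Rightarrow> real \<Rightarrow> real \<Rightarrow> real \<Rightarrow> real \<Rightarrow> real" where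
  "Fext R b1 b2 b3 q n =
     (if (q,n) \<in> Freg R b1 b2 b3 then Fform R b1 b2 b3 q n
      else Lim (at (q,n) within Freg R b1 b2 b3) (\<lambda>p. Fform R b1 b2 b3 (fst p) (snd p)))"

definition F_wd :: "real \<Rightarrow> real \<Rightarrow> real \<Rightarrow> real \<Rightarrow> real \<Rightarrow> real \<Rightarrow> bool" where
  "F_wd R b1 b2 b3 q n \<longleftrightarrow> q > 0 \<and> n \<ge> 0 \<and>
     ((q,n) \<in> Freg R b1 b2 b3 \<or>
      (at (q,n) within Freg R b1 b2 b3 \<noteq> bot \<and>
       (\<exists>L. ((\<lambda>p. Fform R b1 b2 b3 (fst p) (snd p)) \<longlongrightarrow> L) (at (q,n) within Freg R b1 b2 b3))))"

end

theory Submission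
  imports Defs
begin


definition Sq where "Sq R b1 b2 b3 q n = sqrt ((phifun R b1 b2 b3 q n)^2 + Esq R b1 b2 b3 q)"
definition Gc where "Gc R b1 b2 b3 q n = 2*(1-R)*(1-q)*((1-R)*q + R) - phifun R b1 b2 b3 q n
      + sgn (1-R) * Sq R b1 b2 b3 q n"
definition Wc where "Wc R b1 b2 b3 q n = 2*(1-R)*R*(1-q)^2 - phifun R b1 b2 b3 q n
      + sgn (1-R) * Sq R b1 b2 b3 q n"
definition Kf where "Kf R b1 b2 b3 q n = ((1-R)*q+R)*b1*(n - mfun R b1 b2 b3 q)
      - (1-R)*q*((1-q)*((1-R)*q+R) + (b2-1)*R)"
definition Hf where "Hf R b1 b2 b3 q n = (1-R)/(R*(1-q)) - 2*(1-R)^2*q/(R * Oden R b1 b2 b3 q n)"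
definition H2 where "H2 R b1 b2 b3 q n = (1-R)*b1*(n - mfun R b1 b2 b3 q)*Gc R b1 b2 b3 q n
      / (Kf R b1 b2 b3 q n * Wc R b1 b2 b3 q n)"

lemma alg_H2: fixes x1 x2 x3 x4 nm gc wc k :: real
  assumes "x1 \<noteq> 0" "x2 \<noteq> 0" "x3 \<noteq> 0" "x4 \<noteq> 0" "gc \<noteq> 0" "wc \<noteq> 0" "k \<noteq> 0"
  shows "x1*(-4*x1*x3*x2^2*x4*nm/wc)/(x3*x2*(-4*x1*x2*k/gc)) = x1*x4*nm*gc/(k*wc)"
  using assms by (simp add: field_simps power2_eq_square)

lemma alg_quot: fixes x1 x2 x3 x4 x5 y :: real
  assumes "x2 \<noteq> 0" "x4 \<noteq> 0" "x5 \<noteq> 0" "y \<noteq> 0"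
  shows "x1*x2*x3*gc/(x2*x4*y*x5) = (x1*gc/(x4*x5))*(x3/y)"
  using assms by (simp add: field_simps)


definition gq where "gq R b2 q = (1-q)*((1-R)*q+R) + (b2-1)*R"

lemma factor: fixes w a c r q :: real
  assumes "w \<noteq> 0" "r^2 = a^2 + 4*w*c"
  shows "-w*q^2 + a*q + c = -w*(q - (a + r)/(2*w))*(q - (a - r)/(2*w))"
proof -
  have rr: "r*r = a*a + 4*w*c" using assms(2) by (simp add: power2_eq_square)
  have "r*(r*w) = (r*r)*w" by simp
  also have "\<dots> = (a*a + 4*w*c)*w" using rr by simp
  finally have "a*(a*w) + c*(w*(w*4)) = r*(r*w)" by (simp add: algebra_simps)
  thus ?thesis using assms(1) by (simp add: field_simps power2_eq_square)
qed

lemma complete_sq: fixes w a c q :: real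
  assumes "w \<noteq> 0" shows "-w*q^2 + a*q + c = -w*(q - a/(2*w))^2 + (a^2 + 4*w*c)/(4*w)"
  using assms by (simp add: field_simps power2_eq_square)

lemma alg_Ap: fixes R q c :: real
  shows "2*(1-R)*(1-q)*((1-R)*q+R)^2 - (1-R)*q*((1-q)*((1-R)*q+R) + c*R) - (1-R)*R*((1-R)*q+R)*((1-q)^2 - c)
     = (1-R)*(1-q)*(((1-R)*q+R)^2 + c*R^2)"
  by (simp add: algebra_simps power2_eq_square)

lemma alg_V: fixes w u R q E V :: real
  assumes "u \<noteq> 0" "R \<noteq> 0" "w \<noteq> 0" "D \<noteq> 0" "E > 0" "V = 2*(w*u*E/D)"
  shows "w/(R*u) - 2*w^2*q/(R*V) = -(w/(R*u))*(q*D/E - 1)"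
  unfolding assms(6) using assms(1-5) by (simp add: field_simps power2_eq_square)

locale prm =
  fixes R b1 b2 b3 :: real
  assumes R0: "R > 0" and R1: "R \<noteq> 1" and B1: "b1 > 0" and B2: "b2 > 1" and B3: "b3 > 0"
begin

abbreviation "m \<equiv> mfun R b1 b2 b3"
abbreviation "l \<equiv> ellfun R b1 b2 b3"
abbreviation "G \<equiv> Oden R b1 b2 b3"
abbreviation "p \<equiv> phifun R b1 b2 b3"
abbreviation "S \<equiv> Sq R b1 b2 b3"
abbreviation "K \<equiv> Kf R b1 b2 b3"
abbreviation "GC \<equiv> Gc R b1 b2 b3"
abbreviation "WC \<equiv> Wc R b1 b2 b3"
abbreviation "H \<equiv> Hf R b1 b2 b3"

lemma phi_alt: "p q n = b1*(n - m q) + (1-R)*R*((1-q)^2 - (b2-1))"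
  using B1 unfolding phifun_def mfun_def by (simp add: field_simps power2_eq_square)

lemma Esq_nonneg: "Esq R b1 b2 b3 q \<ge> 0"
  using B2 unfolding Esq_def by simp

lemma Esq_pos: "q \<noteq> 1 \<Longrightarrow> Esq R b1 b2 b3 q > 0"
  using B2 R0 R1 unfolding Esq_def by simp

lemma S_sq: "(S q n)^2 = (p q n)^2 + Esq R b1 b2 b3 q"
  unfolding Sq_def using Esq_nonneg by (simp add: add_nonneg_nonneg)

lemma S_ge: "S q n \<ge> \<bar>p q n\<bar>"
proof -
  have "sqrt ((p q n)^2) \<le> S q n" unfolding Sq_def using Esq_nonneg by (intro real_sqrt_le_mono) simp
  thus ?thesis by simp
qed

lemma S_gt: "q \<noteq> 1 \<Longrightarrow> S q n > \<bar>p q n\<bar>"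
proof -
  assume "q \<noteq> 1"
  hence "sqrt ((p q n)^2) < S q n" unfolding Sq_def using Esq_pos by (intro real_sqrt_less_mono) simp
  thus ?thesis by simp
qed

lemma Oden_eq: "G q n = 2*(1-R)*(1-q)*((1-R)*q + R) - p q n - sgn (1-R) * S q n"
  unfolding Oden_def Sq_def by simp

lemma sgn_sq: "(sgn (1-R::real))^2 = 1"
  using R1 by (simp add: sgn_if)

lemma I1: "G q n * GC q n = -4*(1-R)*(1-q)*K q n"
proof -
  define S' where "S' = S q n"
  define p' where "p' = p q n"
  define g where "g = sgn (1-R)"
  have S2: "S'^2 = p'^2 + Esq R b1 b2 b3 q" using S_sq S'_def p'_def by simp
  have g2: "g^2 = 1" using sgn_sq g_def by simp
  have pa: "p' = b1*(n - m q) + (1-R)*R*((1-q)^2 - (b2-1))" using phi_alt p'_def by simp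
  have "G q n * GC q n = (2*(1-R)*(1-q)*((1-R)*q + R) - p')^2 - g^2*S'^2"
    unfolding Oden_eq Gc_def S'_def[symmetric] p'_def[symmetric] g_def[symmetric]
    by (simp add: algebra_simps power2_eq_square)
  also have "\<dots> = -4*(1-R)*(1-q)*K q n"
    unfolding g2 S2 Esq_def Kf_def pa by (simp add: algebra_simps power2_eq_square)
  finally show ?thesis .
qed

lemma I2: "(G q n - 2*(1-R)*q*(1-q)) * WC q n = -4*(1-R)*R*(1-q)^2*b1*(n - m q)"
proof -
  define S' where "S' = S q n"
  define p' where "p' = p q n"
  define g where "g = sgn (1-R)"
  have S2: "S'^2 = p'^2 + Esq R b1 b2 b3 q" using S_sq S'_def p'_def by simp
  have g2: "g^2 = 1" using sgn_sq g_def by simp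
  have pa: "p' = b1*(n - m q) + (1-R)*R*((1-q)^2 - (b2-1))" using phi_alt p'_def by simp
  have "(G q n - 2*(1-R)*q*(1-q)) * WC q n = (2*(1-R)*R*(1-q)^2 - p')^2 - g^2*S'^2"
    unfolding Oden_eq Wc_def S'_def[symmetric] p'_def[symmetric] g_def[symmetric]
    by (simp add: algebra_simps power2_eq_square)
  also have "\<dots> = -4*(1-R)*R*(1-q)^2*b1*(n - m q)"
    unfolding g2 S2 Esq_def pa by (simp add: algebra_simps power2_eq_square)
  finally show ?thesis .
qed

lemma l_form: assumes "(1-R)*q+R \<noteq> 0"
  shows "l q = m q + (1-R)*q*((1-q)*((1-R)*q+R) + (b2-1)*R)/(b1*((1-R)*q+R))"
proof -
  define D where "D = (1-R)*q+R"
  have D0: "D \<noteq> 0" using assms D_def by simp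
  have "l q = m q + (1-R)/b1 * q * (1-q) + (b2-1)*R*(1-R)/b1 * (q / D)"
    unfolding ellfun_def D_def by simp
  also have "\<dots> = m q + (1-R)*q*((1-q)*D + (b2-1)*R)/(b1*D)"
    using D0 B1 by (simp add: field_simps)
  finally show ?thesis unfolding D_def .
qed

lemma K_eq: assumes "(1-R)*q+R \<noteq> 0" shows "K q n = b1*((1-R)*q+R)*(n - l q)"
proof -
  define D where "D = (1-R)*q+R"
  define M where "M = m q"
  have D0: "D \<noteq> 0" using assms D_def by simp
  have "K q n = D*b1*(n - M) - (1-R)*q*((1-q)*D + (b2-1)*R)" unfolding Kf_def D_def M_def by simp
  also have "\<dots> = b1*D*(n - (M + (1-R)*q*((1-q)*D + (b2-1)*R)/(b1*D)))"
    using D0 B1 by (simp add: field_simps)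
  finally show ?thesis unfolding l_form[OF assms] D_def M_def .
qed

lemma l_minus_m: "(1-R)*q+R \<noteq> 0 \<Longrightarrow> l q - m q = (1-R)*q*((1-q)*((1-R)*q+R) + (b2-1)*R)/(b1*((1-R)*q+R))"
  using l_form by simp

lemma Q_gt1: "R > 1 \<Longrightarrow> R/(R-1) > 1" by (simp add: field_simps)

lemma sig_lt: "R < 1 \<Longrightarrow> sgn (1-R) = 1" by simp
lemma sig_gt: "R > 1 \<Longrightarrow> sgn (1-R) = -1" by simp

lemma G_neg_R1: assumes "R < 1" "q > 1" shows "G q n < 0"
proof -
  have a: "(1-R)*(1-q) < 0" using assms by (simp add: mult_pos_neg)
  have b: "(1-R)*q + R > 0" using assms R0 by (simp add: add_pos_pos)
  have "(1-R)*(1-q)*((1-R)*q + R) < 0" using a b by (simp add: mult_neg_pos)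
  moreover have "S q n > \<bar>p q n\<bar>" using S_gt assms by simp
  ultimately show ?thesis unfolding Oden_eq sig_lt[OF assms(1)] by linarith
qed

lemma Gc_pos_R1: assumes "R < 1" "0 < q" "q < 1" shows "GC q n > 0"
proof -
  have "(1-R)*(1-q)*((1-R)*q + R) > 0" using assms R0 by (auto intro!: mult_pos_pos add_pos_pos)
  moreover have "S q n \<ge> \<bar>p q n\<bar>" using S_ge by simp
  ultimately show ?thesis unfolding Gc_def sig_lt[OF assms(1)] by linarith
qed

lemma G_pos_R2: assumes "R > 1" "1 < q" "q \<le> R/(R-1)" shows "G q n > 0"
proof -
  have D: "(1-R)*q + R \<ge> 0" using assms by (simp add: field_simps)
  have "(1-R)*(1-q) > 0" using assms by (intro mult_neg_neg) auto
  hence "(1-R)*(1-q)*((1-R)*q + R) \<ge> 0" using D by simp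
  moreover have "S q n > \<bar>p q n\<bar>" using S_gt assms by simp
  ultimately show ?thesis unfolding Oden_eq sig_gt[OF assms(1)] by linarith
qed

lemma Gc_neg_R2: assumes "R > 1" "0 < q" "q < 1 \<or> q > R/(R-1)" shows "GC q n < 0"
proof -
  have "(1-R)*(1-q)*((1-R)*q + R) < 0"
  proof (cases "q < 1")
    case True
    have "(R-1)*q < (R-1)*1" using True assms by (intro mult_strict_left_mono) auto
    hence "(1-R)*q + R > 0" by (simp add: algebra_simps)
    thus ?thesis using True assms by (intro mult_neg_pos) (auto intro!: mult_neg_pos)
  next
    case False
    hence "q > R/(R-1)" using assms by auto
    hence D: "(1-R)*q + R < 0" using assms by (simp add: field_simps)
    have "q > 1" using \<open>q > R/(R-1)\<close> Q_gt1[OF assms(1)] by linarith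
    hence "(1-R)*(1-q) > 0" using assms by (intro mult_neg_neg) auto
    thus ?thesis using D by (simp add: mult_pos_neg)
  qed
  moreover have "S q n \<ge> \<bar>p q n\<bar>" using S_ge by simp
  ultimately show ?thesis unfolding Gc_def sig_gt[OF assms(1)] by linarith
qed

lemma Wc_pos_R1: assumes "R < 1" "q \<noteq> 1" shows "WC q n > 0"
proof -
  have "(1-R)*R*(1-q)^2 > 0" using assms R0 by simp
  moreover have "S q n > \<bar>p q n\<bar>" using S_gt assms by simp
  ultimately show ?thesis unfolding Wc_def sig_lt[OF assms(1)] by linarith
qed

lemma Wc_neg_R2: assumes "R > 1" "q \<noteq> 1" shows "WC q n < 0"
proof -
  have "(1-R)*R*(1-q)^2 < 0" using assms R0 by (simp add: mult_neg_pos)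
  moreover have "S q n > \<bar>p q n\<bar>" using S_gt assms by simp
  ultimately show ?thesis unfolding Wc_def sig_gt[OF assms(1)] by linarith
qed

lemma Hf_alt: assumes "q \<noteq> 1" "G q n \<noteq> 0"
  shows "H q n = (1-R)*(G q n - 2*(1-R)*q*(1-q))/(R*(1-q)*G q n)"
  unfolding Hf_def using assms R0 by (simp add: field_simps power2_eq_square)

lemma Hf_H2: assumes "q \<noteq> 1" "GC q n \<noteq> 0" "WC q n \<noteq> 0" "K q n \<noteq> 0"
  shows "H q n = (1-R)*b1*(n - m q)*GC q n/(K q n * WC q n)"
proof -
  have G: "G q n = -4*(1-R)*(1-q)*K q n / GC q n" using I1[of q n] assms by (simp add: field_simps)
  have Gm: "G q n - 2*(1-R)*q*(1-q) = -4*(1-R)*R*(1-q)^2*b1*(n - m q) / WC q n"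
    using I2[of q n] assms by (simp add: field_simps)
  have G0: "G q n \<noteq> 0" using G assms R1 by simp
  have "H q n = (1-R)*(-4*(1-R)*R*(1-q)^2*b1*(n - m q) / WC q n)/(R*(1-q)*(-4*(1-R)*(1-q)*K q n / GC q n))"
    unfolding Hf_alt[OF assms(1) G0] Gm by (simp only: G)
  also have "\<dots> = (1-R)*b1*(n - m q)*GC q n/(K q n * WC q n)"
    by (rule alg_H2) (use assms R0 R1 B1 in auto)
  finally show ?thesis .
qed

lemma D_pos_R1: "R < 1 \<Longrightarrow> q \<ge> 0 \<Longrightarrow> (1-R)*q + R > 0"
  using R0 by (smt (verit) mult_nonneg_nonneg)

lemma D_pos_R2: assumes "R > 1" "q < R/(R-1)" shows "(1-R)*q + R > 0"
  using assms by (simp add: field_simps)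

lemma D_neg_R2: assumes "R > 1" "q > R/(R-1)" shows "(1-R)*q + R < 0"
  using assms by (simp add: field_simps)

lemma H_quot: assumes "q \<noteq> 1" "GC q n \<noteq> 0" "WC q n \<noteq> 0" "(1-R)*q+R \<noteq> 0" "n \<noteq> l q"
  shows "H q n = ((1-R)*GC q n/(((1-R)*q+R)*WC q n)) * ((n - m q)/(n - l q))"
proof -
  have K0: "K q n \<noteq> 0" unfolding K_eq[OF assms(4)] using assms B1 by simp
  show ?thesis unfolding Hf_H2[OF assms(1-3) K0] K_eq[OF assms(4)] 
    by (rule alg_quot) (use assms B1 in auto)
qed

lemma H_prod: assumes "q \<noteq> 1" "G q n \<noteq> 0"
  shows "H q n = (1-R)*(-4*(1-R)*R*(1-q)^2*b1*(n - m q))/(WC q n*R*(1-q)*G q n)"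
proof -
  have W0: "WC q n \<noteq> 0"
  proof (cases "R < 1")
    case True then show ?thesis using Wc_pos_R1[OF True assms(1), of n] by simp
  next
    case False then have "R > 1" using R1 by simp
    then show ?thesis using Wc_neg_R2[OF _ assms(1), of n] by simp
  qed
  have Gm: "G q n - 2*(1-R)*q*(1-q) = -4*(1-R)*R*(1-q)^2*b1*(n - m q) / WC q n"
    using I2[of q n] W0 by (simp add: field_simps)
  show ?thesis unfolding Hf_alt[OF assms] Gm by (simp add: field_simps)
qed

lemma quot_sign:
  fixes a b x :: real
  assumes "a < b"
  shows "(a < x \<and> x < b \<longrightarrow> (x - a)/(x - b) < 0) \<and> (x < a \<or> x > b \<longrightarrow> (x - a)/(x - b) > 0)"
  using assms by (auto simp: divide_less_0_iff zero_less_divide_iff)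


lemma gq_quad: "gq R b2 q = -(1-R)*q^2 + (1-2*R)*q + R*b2"
  unfolding gq_def by (simp add: algebra_simps power2_eq_square)

lemma lm_g: "(1-R)*q+R \<noteq> 0 \<Longrightarrow> l q - m q = (1-R)*q*gq R b2 q/(b1*((1-R)*q+R))"
  unfolding gq_def by (rule l_minus_m)

lemma g_pos_le1: assumes "0 < q" "q \<le> 1" "(1-R)*q+R > 0" shows "gq R b2 q > 0"
  unfolding gq_def using assms B2 R0 by (smt (verit) mult_nonneg_nonneg mult_pos_pos)

lemma P1a: assumes "R < 1"
  shows "(\<forall>q. 0 < q \<and> q \<le> 1 \<longrightarrow> l q > m q) \<and>
      (\<exists>q0 > 1. m q0 = l q0 \<and>
         (\<forall>q. 0 < q \<and> q < q0 \<longrightarrow> m q < l q) \<and>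
         (\<forall>q. q > q0 \<longrightarrow> m q > l q))"
proof -
  define w where "w = 1 - R"
  have w0: "w > 0" using assms w_def by simp
  define a where "a = 1 - 2*R"
  define dd where "dd = a^2 + 4*w*(R*b2)"
  have dd0: "dd > a^2" unfolding dd_def using w0 R0 B2 by simp
  define r where "r = sqrt dd"
  have "0 \<le> dd" using dd0 zero_le_power2[of a] by linarith
  hence r2: "r^2 = dd" unfolding r_def by simp
  have ra: "r > \<bar>a\<bar>" unfolding r_def using dd0 real_sqrt_less_mono[of "a^2" dd] by simp
  define q0 where "q0 = (a + r)/(2*w)"
  define q1 where "q1 = (a - r)/(2*w)"
  have q1n: "q1 < 0" unfolding q1_def using ra w0 by (simp add: divide_neg_pos)
  have gf: "\<And>q. gq R b2 q = -w*(q - q0)*(q - q1)"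
    unfolding gq_quad q0_def q1_def w_def[symmetric] a_def[symmetric]
    by (rule factor) (use w0 r2 dd_def in auto)
  have lm: "\<And>q. q > 0 \<Longrightarrow> l q - m q = w*q*gq R b2 q/(b1*((1-R)*q+R))"
    using lm_g D_pos_R1[OF assms] w_def by (simp add: less_imp_neq[symmetric])
  have Dp: "\<And>q. q > 0 \<Longrightarrow> (1-R)*q+R > 0" using D_pos_R1[OF assms] by simp
  have sgn_lm: "\<And>q. q > 0 \<Longrightarrow> (l q - m q > 0 \<longleftrightarrow> gq R b2 q > 0) \<and> (l q - m q < 0 \<longleftrightarrow> gq R b2 q < 0) \<and> (l q = m q \<longleftrightarrow> gq R b2 q = 0)"
  proof -
    fix q :: real assume q: "q > 0"
    define cc where "cc = w*q/(b1*((1-R)*q+R))"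
    have c: "cc > 0" unfolding cc_def using w0 q B1 Dp[OF q] by simp
    have e: "l q - m q = cc * gq R b2 q" using lm[OF q] unfolding cc_def by simp
    show "(l q - m q > 0 \<longleftrightarrow> gq R b2 q > 0) \<and> (l q - m q < 0 \<longleftrightarrow> gq R b2 q < 0) \<and> (l q = m q \<longleftrightarrow> gq R b2 q = 0)"
    proof -
      have eq: "l q = m q \<longleftrightarrow> cc * gq R b2 q = 0" by (simp add: e[symmetric])
      show ?thesis unfolding e eq using c by (auto simp: zero_less_mult_iff mult_less_0_iff)
    qed
  qed
  have gpos: "\<And>q. 0 < q \<Longrightarrow> q \<le> 1 \<Longrightarrow> gq R b2 q > 0" using g_pos_le1 Dp by blast
  have q0g: "q0 > 1"
  proof (rule ccontr)
    assume "\<not> q0 > 1"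
    hence "-w*(1 - q0)*(1 - q1) \<le> 0" using w0 q1n by (simp add: mult_nonpos_nonneg)
    thus False using gpos[of 1] gf[of 1] by simp
  qed
  have gsign: "\<And>q. q > 0 \<Longrightarrow> (gq R b2 q > 0 \<longleftrightarrow> q < q0) \<and> (gq R b2 q < 0 \<longleftrightarrow> q > q0)"
  proof -
    fix q :: real assume q: "q > 0"
    have "q - q1 > 0" using q q1n by simp
    thus "(gq R b2 q > 0 \<longleftrightarrow> q < q0) \<and> (gq R b2 q < 0 \<longleftrightarrow> q > q0)" unfolding gf using w0
      by (auto simp: zero_less_mult_iff mult_less_0_iff)
  qed
  show ?thesis
  proof (intro conjI allI impI exI[of _ q0])
    fix q :: real assume "0 < q \<and> q \<le> 1" thus "l q > m q" using sgn_lm gpos by force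
  next
    show "q0 > 1" by fact
  next
    have "gq R b2 q0 = 0" unfolding gf by simp
    thus "m q0 = l q0" using sgn_lm[of q0] q0g by simp
  next
    fix q :: real assume "0 < q \<and> q < q0" thus "m q < l q" using sgn_lm[of q] gsign[of q] by auto
  next
    fix q :: real assume "q > q0" thus "m q > l q" using sgn_lm[of q] gsign[of q] q0g by auto
  qed
qed

lemma P1b: assumes "R > 1"
  shows "(\<forall>q. 0 < q \<and> q \<le> 1 \<longrightarrow> m q > l q) \<and>
      (\<forall>q. q > R/(R-1) \<longrightarrow> m q \<noteq> l q) \<and>
      ((\<forall>q. 1 < q \<and> q < R/(R-1) \<longrightarrow> m q > l q) \<or>
       (\<exists>q1. 1 < q1 \<and> q1 < R/(R-1) \<and> m q1 = l q1 \<and>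
          (\<forall>q. 1 < q \<and> q < R/(R-1) \<and> q \<noteq> q1 \<longrightarrow> m q > l q)) \<or>
       (\<exists>q1 q2. 1 < q1 \<and> q1 < q2 \<and> q2 < R/(R-1) \<and>
          m q1 = l q1 \<and> m q2 = l q2 \<and>
          (\<forall>q. 1 < q \<and> q < q1 \<longrightarrow> m q > l q) \<and>
          (\<forall>q. q1 < q \<and> q < q2 \<longrightarrow> m q < l q) \<and>
          (\<forall>q. q2 < q \<and> q < R/(R-1) \<longrightarrow> m q > l q)))"
proof -
  define w where "w = 1 - R"
  have w0: "w < 0" using assms w_def by simp
  define Q where "Q = R/(R-1)"
  have Q1: "Q > 1" using Q_gt1[OF assms] Q_def by simp
  have lm: "\<And>q. (1-R)*q+R \<noteq> 0 \<Longrightarrow> l q - m q = (w*q/(b1*((1-R)*q+R))) * gq R b2 q"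
    using lm_g w_def by simp
  have rel: "\<And>q. q > 0 \<Longrightarrow> q < Q \<Longrightarrow> (m q > l q \<longleftrightarrow> gq R b2 q > 0) \<and> (m q = l q \<longleftrightarrow> gq R b2 q = 0) \<and> (m q < l q \<longleftrightarrow> gq R b2 q < 0)"
  proof -
    fix q :: real assume q: "q > 0" "q < Q"
    have Dp: "(1-R)*q+R > 0" using D_pos_R2[OF assms] q Q_def by simp
    define cc where "cc = w*q/(b1*((1-R)*q+R))"
    have c: "cc < 0" unfolding cc_def using w0 q B1 Dp by (simp add: divide_neg_pos mult_neg_pos)
    have e: "l q - m q = cc * gq R b2 q" using lm Dp unfolding cc_def by simp
    have eq: "m q = l q \<longleftrightarrow> cc * gq R b2 q = 0" unfolding e[symmetric] by linarith
    have g1: "m q > l q \<longleftrightarrow> cc * gq R b2 q < 0" by (simp add: e[symmetric])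
    have g2: "m q < l q \<longleftrightarrow> cc * gq R b2 q > 0" by (simp add: e[symmetric])
    show "(m q > l q \<longleftrightarrow> gq R b2 q > 0) \<and> (m q = l q \<longleftrightarrow> gq R b2 q = 0) \<and> (m q < l q \<longleftrightarrow> gq R b2 q < 0)"
      unfolding eq g1 g2 using c by (auto simp: zero_less_mult_iff mult_less_0_iff)
  qed
  have part1: "\<forall>q. 0 < q \<and> q \<le> 1 \<longrightarrow> m q > l q"
  proof (intro allI impI)
    fix q :: real assume q: "0 < q \<and> q \<le> 1"
    have "(1-R)*q+R > 0" using D_pos_R2[OF assms] q Q1 Q_def by simp
    hence "gq R b2 q > 0" using g_pos_le1 q by simp
    thus "m q > l q" using rel[of q] q Q1 by simp
  qed
  have part2: "\<forall>q. q > R/(R-1) \<longrightarrow> m q \<noteq> l q"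
  proof (intro allI impI)
    fix q :: real assume q: "q > R/(R-1)"
    have Dn: "(1-R)*q+R < 0" using D_neg_R2[OF assms q] .
    have q1: "q > 1" using q Q1 Q_def by simp
    have "(1-q)*((1-R)*q+R) > 0" using Dn q1 by (simp add: mult_neg_neg)
    hence gp: "gq R b2 q > 0" unfolding gq_def using B2 R0 mult_pos_pos[of "b2-1" R] by linarith
    have "w*q < 0" using w0 q1 by (simp add: mult_neg_pos)
    moreover have "b1*((1-R)*q+R) < 0" using B1 Dn by (simp add: mult_pos_neg)
    ultimately have cp: "w*q/(b1*((1-R)*q+R)) > 0" by (simp add: divide_neg_neg)
    have e: "l q - m q = (w*q/(b1*((1-R)*q+R))) * gq R b2 q" using lm[of q] Dn by simp
    have "l q - m q > 0" unfolding e by (rule mult_pos_pos[OF cp gp])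
    thus "m q \<noteq> l q" by simp
  qed
  define a where "a = 1 - 2*R"
  define dd where "dd = a^2 + 4*w*(R*b2)"
  have gQ: "gq R b2 Q = (b2 - 1)*R" unfolding gq_def Q_def using assms by (simp add: field_simps)
  have g1: "gq R b2 1 = (b2 - 1)*R" unfolding gq_def by simp
  have part3: "(\<forall>q. 1 < q \<and> q < Q \<longrightarrow> gq R b2 q > 0) \<or>
       (\<exists>q1. 1 < q1 \<and> q1 < Q \<and> gq R b2 q1 = 0 \<and>
          (\<forall>q. 1 < q \<and> q < Q \<and> q \<noteq> q1 \<longrightarrow> gq R b2 q > 0)) \<or>
       (\<exists>q1 q2. 1 < q1 \<and> q1 < q2 \<and> q2 < Q \<and>
          gq R b2 q1 = 0 \<and> gq R b2 q2 = 0 \<and>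
          (\<forall>q. 1 < q \<and> q < q1 \<longrightarrow> gq R b2 q > 0) \<and>
          (\<forall>q. q1 < q \<and> q < q2 \<longrightarrow> gq R b2 q < 0) \<and>
          (\<forall>q. q2 < q \<and> q < Q \<longrightarrow> gq R b2 q > 0))"
  proof (cases "dd < 0")
    case True
    have "\<And>q. gq R b2 q = -w*(q - a/(2*w))^2 + dd/(4*w)"
      unfolding gq_quad w_def[symmetric] a_def[symmetric] dd_def using w0 by (intro complete_sq) simp
    moreover have "\<And>q. -w*(q - a/(2*w))^2 \<ge> 0" using w0 by (intro mult_nonneg_nonneg) simp_all
    moreover have "dd/(4*w) > 0" using True w0 by (simp add: divide_neg_neg)
    ultimately have "\<And>q. gq R b2 q > 0" by (smt (verit))
    thus ?thesis by blast
  next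
    case False
    define r where "r = sqrt dd"
    have dd0: "dd \<ge> 0" using False by simp
    hence r2: "r^2 = dd" unfolding r_def by simp
    have r0: "r \<ge> 0" unfolding r_def using dd0 by simp
    define r1 where "r1 = (a + r)/(2*w)"
    define r2' where "r2' = (a - r)/(2*w)"
    have r12: "r1 \<le> r2'" unfolding r1_def r2'_def using w0 r0 by (simp add: divide_le_eq field_simps mult_nonneg_nonpos)
    have gf: "\<And>q. gq R b2 q = -w*(q - r1)*(q - r2')"
      unfolding gq_quad r1_def r2'_def w_def[symmetric] a_def[symmetric]
      by (rule factor) (use w0 r2 dd_def in auto)
    have gf2: "\<And>q. gq R b2 q = (-w) * ((q - r1)*(q - r2'))" using gf by simp
    have pp: "\<And>x::real. x > 0 \<longleftrightarrow> (-w) * x > 0" using w0 by (auto simp: zero_less_mult_iff mult_less_0_iff)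
    have nn: "\<And>x::real. x < 0 \<longleftrightarrow> (-w) * x < 0" using w0 by (auto simp: zero_less_mult_iff mult_less_0_iff)
    have pos_iff: "\<And>q. gq R b2 q > 0 \<longleftrightarrow> q < r1 \<or> q > r2'"
    proof -
      fix q :: real
      have "gq R b2 q > 0 \<longleftrightarrow> (q - r1)*(q - r2') > 0" unfolding gf2 by (rule pp[symmetric])
      also have "\<dots> \<longleftrightarrow> q < r1 \<or> q > r2'" using r12 by (auto simp: zero_less_mult_iff)
      finally show "gq R b2 q > 0 \<longleftrightarrow> q < r1 \<or> q > r2'" .
    qed
    have neg_iff: "\<And>q. gq R b2 q < 0 \<longleftrightarrow> r1 < q \<and> q < r2'"
    proof -
      fix q :: real
      have "gq R b2 q < 0 \<longleftrightarrow> (q - r1)*(q - r2') < 0" unfolding gf2 by (rule nn[symmetric])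
      also have "\<dots> \<longleftrightarrow> r1 < q \<and> q < r2'" using r12 by (auto simp: mult_less_0_iff)
      finally show "gq R b2 q < 0 \<longleftrightarrow> r1 < q \<and> q < r2'" .
    qed
    have z1: "gq R b2 r1 = 0" "gq R b2 r2' = 0" unfolding gf by simp_all
    have c1: "1 < r1 \<or> 1 > r2'" using pos_iff[of 1] g1 B2 R0 by simp
    have cQ: "Q < r1 \<or> Q > r2'" using pos_iff[of Q] gQ B2 R0 by simp
    show ?thesis
    proof (cases "1 < r1 \<and> r2' < Q")
      case True
      show ?thesis
      proof (cases "r1 = r2'")
        case True2: True
        have "\<forall>q. 1 < q \<and> q < Q \<and> q \<noteq> r1 \<longrightarrow> gq R b2 q > 0"
        proof (intro allI impI)
          fix q :: real assume "1 < q \<and> q < Q \<and> q \<noteq> r1"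
          hence "q < r1 \<or> q > r2'" using True2 by auto
          thus "gq R b2 q > 0" using pos_iff[of q] by simp
        qed
        thus ?thesis using True True2 z1 by auto
      next
        case False2: False
        have "r1 < r2'" using r12 False2 by simp
        have A: "\<forall>q. 1 < q \<and> q < r1 \<longrightarrow> gq R b2 q > 0" using pos_iff by simp
        have B: "\<forall>q. r1 < q \<and> q < r2' \<longrightarrow> gq R b2 q < 0" using neg_iff by simp
        have C: "\<forall>q. r2' < q \<and> q < Q \<longrightarrow> gq R b2 q > 0" using pos_iff by simp
        show ?thesis using True z1 A B C \<open>r1 < r2'\<close> by blast
      qed
    next
      case False
      have "\<forall>q. 1 < q \<and> q < Q \<longrightarrow> gq R b2 q > 0"
      proof (intro allI impI)
        fix q :: real assume q: "1 < q \<and> q < Q"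
        have "q < r1 \<or> q > r2'" using False c1 cQ q by linarith
        thus "gq R b2 q > 0" using pos_iff[of q] by simp
      qed
      thus ?thesis by blast
    qed
  qed
  have rel2: "\<And>q. 1 < q \<Longrightarrow> q < Q \<Longrightarrow> (m q > l q \<longleftrightarrow> gq R b2 q > 0) \<and> (m q = l q \<longleftrightarrow> gq R b2 q = 0) \<and> (m q < l q \<longleftrightarrow> gq R b2 q < 0)"
    using rel by simp
  have part3': "(\<forall>q. 1 < q \<and> q < Q \<longrightarrow> m q > l q) \<or>
       (\<exists>q1. 1 < q1 \<and> q1 < Q \<and> m q1 = l q1 \<and>
          (\<forall>q. 1 < q \<and> q < Q \<and> q \<noteq> q1 \<longrightarrow> m q > l q)) \<or>
       (\<exists>q1 q2. 1 < q1 \<and> q1 < q2 \<and> q2 < Q \<and>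
          m q1 = l q1 \<and> m q2 = l q2 \<and>
          (\<forall>q. 1 < q \<and> q < q1 \<longrightarrow> m q > l q) \<and>
          (\<forall>q. q1 < q \<and> q < q2 \<longrightarrow> m q < l q) \<and>
          (\<forall>q. q2 < q \<and> q < Q \<longrightarrow> m q > l q))"
    using part3
  proof (elim disjE exE conjE)
    assume "\<forall>q. 1 < q \<and> q < Q \<longrightarrow> gq R b2 q > 0"
    thus ?thesis using rel2 by blast
  next
    fix q1 assume h: "1 < q1" "q1 < Q" "gq R b2 q1 = 0" "\<forall>q. 1 < q \<and> q < Q \<and> q \<noteq> q1 \<longrightarrow> gq R b2 q > 0"
    have "m q1 = l q1" using rel2[OF h(1,2)] h(3) by simp
    moreover have "\<forall>q. 1 < q \<and> q < Q \<and> q \<noteq> q1 \<longrightarrow> m q > l q" using h(4) rel2 by blast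
    ultimately show ?thesis using h by blast
  next
    fix q1 q2 assume h: "1 < q1" "q1 < q2" "q2 < Q" "gq R b2 q1 = 0" "gq R b2 q2 = 0"
      "\<forall>q. 1 < q \<and> q < q1 \<longrightarrow> gq R b2 q > 0"
      "\<forall>q. q1 < q \<and> q < q2 \<longrightarrow> gq R b2 q < 0"
      "\<forall>q. q2 < q \<and> q < Q \<longrightarrow> gq R b2 q > 0"
    have "m q1 = l q1" using rel2[of q1] h by simp
    moreover have "m q2 = l q2" using rel2[of q2] h by simp
    moreover have "\<forall>q. 1 < q \<and> q < q1 \<longrightarrow> m q > l q"
    proof (intro allI impI)
      fix q :: real assume q: "1 < q \<and> q < q1"
      thus "m q > l q" using rel2[of q] h(6) h(1-3) by auto
    qed
    moreover have "\<forall>q. q1 < q \<and> q < q2 \<longrightarrow> m q < l q"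
    proof (intro allI impI)
      fix q :: real assume q: "q1 < q \<and> q < q2"
      thus "m q < l q" using rel2[of q] h(7) h(1-3) by auto
    qed
    moreover have "\<forall>q. q2 < q \<and> q < Q \<longrightarrow> m q > l q"
    proof (intro allI impI)
      fix q :: real assume q: "q2 < q \<and> q < Q"
      thus "m q > l q" using rel2[of q] h(8) h(1-3) by auto
    qed
    ultimately show ?thesis using h by blast
  qed
  show ?thesis using part1 part2 part3' unfolding Q_def by blast
qed

abbreviation "FR \<equiv> Freg R b1 b2 b3"
abbreviation "FF \<equiv> Fform R b1 b2 b3"

lemma Freg_mem: "(q,n) \<in> FR \<longleftrightarrow> q > 0 \<and> n > 0 \<and> q \<noteq> 1 \<and> q \<noteq> R/(R-1) \<and> G q n \<noteq> 0"
  unfolding Freg_def by simp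

lemma Fform_eq: "n \<noteq> 0 \<Longrightarrow> FF q n = H q n"
  unfolding Fform_def Ofun_def Hf_def using R0 by (cases "q = 1"; cases "G q n = 0") (simp_all add: field_simps)

lemma cont_G: "isCont (\<lambda>z. G (fst z) (snd z)) z0"
  unfolding Oden_def phifun_def Esq_def by (intro continuous_intros)

lemma cont_GC: "isCont (\<lambda>z. GC (fst z) (snd z)) z0"
  unfolding Gc_def Sq_def phifun_def Esq_def by (intro continuous_intros)

lemma cont_WC: "isCont (\<lambda>z. WC (fst z) (snd z)) z0"
  unfolding Wc_def Sq_def phifun_def Esq_def by (intro continuous_intros)

lemma cont_K: "isCont (\<lambda>z. K (fst z) (snd z)) z0"
  unfolding Kf_def mfun_def by (intro continuous_intros)

lemma cont_H: assumes "fst z0 \<noteq> 1" "G (fst z0) (snd z0) \<noteq> 0"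
  shows "isCont (\<lambda>z. H (fst z) (snd z)) z0"
proof -
  have "isCont (\<lambda>z. (1-R)/(R*(1-fst z)) - 2*(1-R)^2*fst z/(R * G (fst z) (snd z))) z0"
    using assms R0 by (intro continuous_intros cont_G) auto
  thus ?thesis unfolding Hf_def .
qed

lemma cont_H2: assumes "K (fst z0) (snd z0) * WC (fst z0) (snd z0) \<noteq> 0"
  shows "isCont (\<lambda>z. H2 R b1 b2 b3 (fst z) (snd z)) z0"
proof -
  have "isCont (\<lambda>z. (1-R)*b1*(snd z - m (fst z))*GC (fst z) (snd z) / (K (fst z) (snd z) * WC (fst z) (snd z))) z0"
    using assms unfolding mfun_def by (intro continuous_intros cont_GC cont_WC cont_K) auto
  thus ?thesis unfolding H2_def .
qed

lemma path_tendsto: "((\<lambda>t. (q+t, n+t)) \<longlongrightarrow> (q,n)) (at_right (0::real))"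
proof -
  have "((\<lambda>t. (q+t, n+t)) \<longlongrightarrow> (q+0,n+0)) (at_right (0::real))"
    by (intro tendsto_intros)
  thus ?thesis by simp
qed

lemma path_nonbot: assumes "\<forall>\<^sub>F t in at_right (0::real). (q+t, n+t) \<in> FR"
  shows "at (q,n) within FR \<noteq> bot"
proof
  assume b: "at (q,n) within FR = bot"
  have "filterlim (\<lambda>t. (q+t, n+t)) (at (q,n) within FR) (at_right (0::real))"
  proof (rule filterlim_at_withinI[OF path_tendsto])
    show "\<forall>\<^sub>F t in at_right 0. (q+t, n+t) \<in> FR - {(q,n)}"
      using assms eventually_at_right_less[of "0::real"] by eventually_elim auto
  qed
  hence "filtermap (\<lambda>t. (q+t, n+t)) (at_right (0::real)) \<le> bot" unfolding filterlim_def b .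
  hence "filtermap (\<lambda>t. (q+t, n+t)) (at_right (0::real)) = bot" by (simp add: bot_unique)
  thus False by (simp add: filtermap_bot_iff)
qed

lemma G_path: "((\<lambda>t. G (q+t) (n+t)) \<longlongrightarrow> G q n) (at_right (0::real))"
  using isCont_tendsto_compose[OF cont_G path_tendsto, of q n] by simp

lemma ev_ne: assumes "((f::real\<Rightarrow>real) \<longlongrightarrow> a) F" "a \<noteq> c" shows "\<forall>\<^sub>F t in F. f t \<noteq> c"
  using tendsto_imp_eventually_ne[OF assms] .

lemma path_in: assumes "q > 0" "n \<ge> 0" "q \<noteq> 1" "G q n \<noteq> 0"
  shows "\<forall>\<^sub>F t in at_right (0::real). (q+t, n+t) \<in> FR"
proof -
  have t1: "((\<lambda>t. q + t) \<longlongrightarrow> q) (at_right (0::real))"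
    using tendsto_add[OF tendsto_const[of q] tendsto_ident_at[of 0]] by simp
  have e1: "\<forall>\<^sub>F t in at_right (0::real). q + t \<noteq> 1" using ev_ne[OF t1 assms(3)] .
  have e2: "\<forall>\<^sub>F t in at_right (0::real). q + t \<noteq> R/(R-1)"
  proof (cases "q = R/(R-1)")
    case True thus ?thesis by (intro eventually_mono[OF eventually_at_right_less[of "0::real"]]) simp
  next
    case False show ?thesis by (rule ev_ne[OF t1 False])
  qed
  have e3: "\<forall>\<^sub>F t in at_right (0::real). G (q+t) (n+t) \<noteq> 0" using ev_ne[OF G_path assms(4)] .
  show ?thesis using e1 e2 e3 eventually_at_right_less[of "0::real"]
    by eventually_elim (use assms in \<open>auto simp: Freg_mem\<close>)
qed

lemma GL: assumes "q > 0" "n \<ge> 0" "q \<noteq> 1" "G q n \<noteq> 0"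
  shows "F_wd R b1 b2 b3 q n \<and> Fext R b1 b2 b3 q n = H q n"
proof -
  have nb: "at (q,n) within FR \<noteq> bot" using path_nonbot[OF path_in[OF assms]] .
  have cH: "isCont (\<lambda>z. H (fst z) (snd z)) (q,n)" using cont_H assms by simp
  have "((\<lambda>z. H (fst z) (snd z)) \<longlongrightarrow> H q n) (at (q,n) within FR)"
    using cH unfolding isCont_def by (auto intro: tendsto_within_subset)
  moreover have "\<forall>\<^sub>F z in at (q,n) within FR. H (fst z) (snd z) = FF (fst z) (snd z)"
    unfolding eventually_at_filter
    by (intro always_eventually) (auto simp: Freg_def Fform_eq)
  ultimately have tl: "((\<lambda>z. FF (fst z) (snd z)) \<longlongrightarrow> H q n) (at (q,n) within FR)"
    by (rule Lim_transform_eventually)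
  have wd: "F_wd R b1 b2 b3 q n" unfolding F_wd_def using assms nb tl by blast
  have "Fext R b1 b2 b3 q n = H q n"
  proof (cases "(q,n) \<in> FR")
    case True thus ?thesis unfolding Fext_def using Fform_eq[of n q] by (simp add: Freg_def)
  next
    case False thus ?thesis unfolding Fext_def using tendsto_Lim[OF _ tl] nb by simp
  qed
  thus ?thesis using wd by simp
qed

lemma ev_within: "\<forall>\<^sub>F z in at x. P z \<Longrightarrow> \<forall>\<^sub>F z in at x within T. P z"
  by (rule filter_leD[OF at_le[OF subset_UNIV]])

lemma ev_cont_ne: assumes "isCont f x" "f x \<noteq> (0::real)" shows "\<forall>\<^sub>F z in at x. f z \<noteq> 0"
  using tendsto_imp_eventually_ne[OF assms[unfolded isCont_def]] .

lemma l1_eq: "l 1 = m 1 + (1-R)*(b2-1)*R/b1"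
  unfolding ellfun_def by simp

lemma p1: "p 1 n = b1*(n - l 1)"
  unfolding phi_alt l1_eq using B1 by (simp add: field_simps)

lemma K1: "K 1 n = b1*(n - l 1)"
  unfolding Kf_def l1_eq using B1 by (simp add: field_simps)

lemma S1: "S 1 n = \<bar>p 1 n\<bar>"
  unfolding Sq_def Esq_def by simp

lemma at1_vals: assumes "(1-R)*n < (1-R)*l 1"
  shows "GC 1 n = -2*p 1 n" "WC 1 n = -2*p 1 n" "p 1 n \<noteq> 0"
proof -
  have "sgn (1-R) * \<bar>p 1 n\<bar> = - p 1 n"
  proof (cases "R < 1")
    case True
    hence "n < l 1" using assms by simp
    hence "b1*(n - l 1) < 0" using B1 by (simp add: mult_pos_neg)
    thus ?thesis using True p1 by simp
  next
    case False
    hence "R > 1" using R1 by simp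
    hence "n > l 1" using assms by (simp add: mult_less_cancel_left)
    thus ?thesis using \<open>R > 1\<close> p1 B1 by simp
  qed
  thus "GC 1 n = -2*p 1 n" "WC 1 n = -2*p 1 n" unfolding Gc_def Wc_def S1 by simp_all
  have "n \<noteq> l 1" using assms by auto
  thus "p 1 n \<noteq> 0" using p1 B1 by simp
qed

lemma Q1: assumes "n \<ge> 0" "(1-R)*n < (1-R)*l 1"
  shows "F_wd R b1 b2 b3 1 n \<and> ((\<lambda>q. Fext R b1 b2 b3 q n) \<longlongrightarrow> Fext R b1 b2 b3 1 n) (at 1) \<and>
      Fext R b1 b2 b3 1 n = - ((1-R) * (n - m 1)) / (l 1 - n)"
proof -
  note v = at1_vals[OF assms(2)]
  have K0: "K 1 n \<noteq> 0" using K1 p1 v(3) by simp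
  have KW: "K (fst (1,n)) (snd (1,n)) * WC (fst (1,n)) (snd (1,n)) \<noteq> 0" using K0 v by simp
  have cH2: "isCont (\<lambda>z. H2 R b1 b2 b3 (fst z) (snd z)) (1,n)" using cont_H2[OF KW] .
  have H2v: "H2 R b1 b2 b3 1 n = - ((1-R) * (n - m 1)) / (l 1 - n)"
  proof -
    have "H2 R b1 b2 b3 1 n = (1-R)*b1*(n - m 1)*(-2*p 1 n)/(p 1 n * (-2*p 1 n))"
      unfolding H2_def v(1,2) K1 p1 ..
    also have "\<dots> = (1-R)*b1*(n - m 1)/(b1*(n - l 1))" using v(3) unfolding p1 by simp
    also have "\<dots> = - ((1-R) * (n - m 1)) / (l 1 - n)"
    proof -
      have "n - l 1 \<noteq> 0" using v(3) p1 by simp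
      hence "l 1 - n \<noteq> 0" by simp
      thus ?thesis using B1 \<open>n - l 1 \<noteq> 0\<close> by (simp add: field_simps)
    qed
    finally show ?thesis .
  qed
  have eK: "\<forall>\<^sub>F z in at (1,n). K (fst z) (snd z) \<noteq> 0" using ev_cont_ne[OF cont_K] K0 by simp
  have eGC: "\<forall>\<^sub>F z in at (1,n). GC (fst z) (snd z) \<noteq> 0" using ev_cont_ne[OF cont_GC] v by simp
  have eWC: "\<forall>\<^sub>F z in at (1,n). WC (fst z) (snd z) \<noteq> 0" using ev_cont_ne[OF cont_WC] v by simp
  have pt: "((\<lambda>t. (1+t, n+t)) \<longlongrightarrow> (1,n)) (at_right (0::real))" using path_tendsto[of 1 n] .
  have pat: "filterlim (\<lambda>t. (1+t, n+t)) (at (1,n)) (at_right (0::real))"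
    by (rule filterlim_atI[OF pt]) (intro eventually_mono[OF eventually_at_right_less[of "0::real"]], simp)
  have eKp: "\<forall>\<^sub>F t in at_right (0::real). K (1+t) (n+t) \<noteq> 0"
    using eventually_compose_filterlim[OF eK pat] by simp
  have eGCp: "\<forall>\<^sub>F t in at_right (0::real). GC (1+t) (n+t) \<noteq> 0"
    using eventually_compose_filterlim[OF eGC pat] by simp
  have t1: "((\<lambda>t. 1 + t) \<longlongrightarrow> (1::real)) (at_right (0::real))"
    using tendsto_add[OF tendsto_const[of "1::real"] tendsto_ident_at[of 0]] by simp
  have Qn1: "(1::real) \<noteq> R/(R-1)" using R1 by (auto simp: field_simps)
  have eQ: "\<forall>\<^sub>F t in at_right (0::real). 1 + t \<noteq> R/(R-1)" using ev_ne[OF t1 Qn1] .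
  have ein: "\<forall>\<^sub>F t in at_right (0::real). (1+t, n+t) \<in> FR"
    using eKp eGCp eQ eventually_at_right_less[of "0::real"]
  proof eventually_elim
    case (elim t)
    have "G (1+t) (n+t) * GC (1+t) (n+t) = -4*(1-R)*(1-(1+t))*K (1+t) (n+t)" by (rule I1)
    hence "G (1+t) (n+t) \<noteq> 0" using elim R1 by auto
    thus ?case using elim assms(1) by (simp add: Freg_mem)
  qed
  have nb: "at (1,n) within FR \<noteq> bot" by (rule path_nonbot[OF ein])
  have "((\<lambda>z. H2 R b1 b2 b3 (fst z) (snd z)) \<longlongrightarrow> H2 R b1 b2 b3 1 n) (at (1,n) within FR)"
    using cH2 unfolding isCont_def by (auto intro: tendsto_within_subset)
  moreover have "\<forall>\<^sub>F z in at (1,n) within FR. H2 R b1 b2 b3 (fst z) (snd z) = FF (fst z) (snd z)"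
  proof -
    have "\<forall>\<^sub>F z in at (1,n) within FR. z \<in> FR" unfolding eventually_at_filter by simp
    thus ?thesis using ev_within[OF eK] ev_within[OF eGC] ev_within[OF eWC]
    proof eventually_elim
      case (elim z)
      obtain q' n' where z: "z = (q',n')" by (cases z)
      have "q' \<noteq> 1" "n' \<noteq> 0" using elim z by (auto simp: Freg_mem)
      thus ?case using Hf_H2[of q' n'] Fform_eq[of n' q'] elim z unfolding H2_def by simp
    qed
  qed
  ultimately have tl: "((\<lambda>z. FF (fst z) (snd z)) \<longlongrightarrow> H2 R b1 b2 b3 1 n) (at (1,n) within FR)"
    by (rule Lim_transform_eventually)
  have wd: "F_wd R b1 b2 b3 1 n" unfolding F_wd_def using assms nb tl by auto
  have n1: "(1,n) \<notin> FR" by (simp add: Freg_mem)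
  have Fe: "Fext R b1 b2 b3 1 n = H2 R b1 b2 b3 1 n"
    unfolding Fext_def using tendsto_Lim[OF _ tl] nb n1 by simp
  have tq: "((\<lambda>q. (q, n)) \<longlongrightarrow> (1,n)) (at (1::real))" by (intro tendsto_intros)
  have faq: "filterlim (\<lambda>q. (q, n)) (at (1,n)) (at (1::real))"
    by (rule filterlim_atI[OF tq]) (simp add: eventually_at_filter)
  have eKq: "\<forall>\<^sub>F q in at (1::real). K q n \<noteq> 0" using eventually_compose_filterlim[OF eK faq] by simp
  have eGCq: "\<forall>\<^sub>F q in at (1::real). GC q n \<noteq> 0" using eventually_compose_filterlim[OF eGC faq] by simp
  have eWCq: "\<forall>\<^sub>F q in at (1::real). WC q n \<noteq> 0" using eventually_compose_filterlim[OF eWC faq] by simp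
  have eq0: "\<forall>\<^sub>F q in at (1::real). q > 0"
    using order_tendstoD(1)[OF tendsto_ident_at[of "1::real" UNIV], of 0] by simp
  have eq1: "\<forall>\<^sub>F q in at (1::real). q \<noteq> 1" by (simp add: eventually_at_filter)
  have "((\<lambda>q. H2 R b1 b2 b3 q n) \<longlongrightarrow> H2 R b1 b2 b3 1 n) (at (1::real))"
    using isCont_tendsto_compose[OF cH2 tq] by simp
  moreover have "\<forall>\<^sub>F q in at (1::real). H2 R b1 b2 b3 q n = Fext R b1 b2 b3 q n"
    using eKq eGCq eWCq eq0 eq1
  proof eventually_elim
    case (elim q)
    have "G q n * GC q n = -4*(1-R)*(1-q)*K q n" by (rule I1)
    hence G0: "G q n \<noteq> 0" using elim R1 by auto
    show ?case using GL[OF _ assms(1) _ G0] Hf_H2[of q n] elim unfolding H2_def by simp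
  qed
  ultimately have "((\<lambda>q. Fext R b1 b2 b3 q n) \<longlongrightarrow> H2 R b1 b2 b3 1 n) (at (1::real))"
    by (rule Lim_transform_eventually)
  thus ?thesis using wd Fe H2v by simp
qed
lemma wd_lim: assumes "F_wd R b1 b2 b3 q n" "(q,n) \<notin> FR"
  obtains L where "at (q,n) within FR \<noteq> bot" "((\<lambda>z. H (fst z) (snd z)) \<longlongrightarrow> L) (at (q,n) within FR)"
proof -
  from assms obtain L where nb: "at (q,n) within FR \<noteq> bot"
    and tl: "((\<lambda>z. FF (fst z) (snd z)) \<longlongrightarrow> L) (at (q,n) within FR)"
    unfolding F_wd_def by blast
  have "\<forall>\<^sub>F z in at (q,n) within FR. FF (fst z) (snd z) = H (fst z) (snd z)"
    unfolding eventually_at_filter by (intro always_eventually) (auto simp: Freg_def Fform_eq)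
  from Lim_transform_eventually[OF tl this] show ?thesis using that nb by blast
qed

lemma ev_inFR: "\<forall>\<^sub>F z in at x within FR. z \<in> FR"
  unfolding eventually_at_filter by simp

lemma NW1: assumes "q > 0" "q \<noteq> 1" "G q n = 0"
  shows "\<not> F_wd R b1 b2 b3 q n"
proof
  assume wd: "F_wd R b1 b2 b3 q n"
  have nin: "(q,n) \<notin> FR" using assms by (simp add: Freg_mem)
  obtain L where nb: "at (q,n) within FR \<noteq> bot"
    and tH: "((\<lambda>z. H (fst z) (snd z)) \<longlongrightarrow> L) (at (q,n) within FR)"
    using wd_lim[OF wd nin] by blast
  let ?F = "at (q,n) within FR"
  have tG: "((\<lambda>z. G (fst z) (snd z)) \<longlongrightarrow> 0) ?F"
    using cont_G[of "(q,n)"] assms(3) unfolding isCont_def by (auto intro: tendsto_within_subset)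
  have t1: "((\<lambda>z. G (fst z) (snd z) * H (fst z) (snd z)) \<longlongrightarrow> 0 * L) ?F"
    by (rule tendsto_mult[OF tG tH])
  have tf: "((\<lambda>z. fst z) \<longlongrightarrow> q) ?F"
    using tendsto_fst[OF tendsto_ident_at[of "(q,n)" FR]] by simp
  have t2: "((\<lambda>z. G (fst z) (snd z) * ((1-R)/(R*(1-fst z))) - 2*(1-R)^2*fst z/R) \<longlongrightarrow>
      0 * ((1-R)/(R*(1-q))) - 2*(1-R)^2*q/R) ?F"
    using assms R0 by (intro tendsto_intros tG tf) auto
  have "\<forall>\<^sub>F z in ?F. G (fst z) (snd z) * H (fst z) (snd z) =
      G (fst z) (snd z) * ((1-R)/(R*(1-fst z))) - 2*(1-R)^2*fst z/R"
    using ev_inFR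
  proof eventually_elim
    case (elim z)
    hence "G (fst z) (snd z) \<noteq> 0" "fst z \<noteq> 1" by (cases z, simp add: Freg_mem)+
    thus ?case unfolding Hf_def using R0 by (simp add: field_simps)
  qed
  from Lim_transform_eventually[OF t1 this] have t3: "((\<lambda>z. G (fst z) (snd z) * ((1-R)/(R*(1-fst z))) - 2*(1-R)^2*fst z/R) \<longlongrightarrow> 0 * L) ?F" .
  have "0 * L = 0 * ((1-R)/(R*(1-q))) - 2*(1-R)^2*q/R" using tendsto_unique[OF nb t3 t2] .
  thus False using assms R0 R1 by simp
qed

lemma G1: "G 1 n = - p 1 n - sgn (1-R) * \<bar>p 1 n\<bar>"
  unfolding Oden_eq S1 by simp

lemma NW2: assumes "(1-R)*n > (1-R)*l 1"
  shows "\<not> F_wd R b1 b2 b3 1 n"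
proof
  assume wd: "F_wd R b1 b2 b3 1 n"
  have nin: "(1,n) \<notin> FR" by (simp add: Freg_mem)
  obtain L where nb: "at (1,n) within FR \<noteq> bot"
    and tH: "((\<lambda>z. H (fst z) (snd z)) \<longlongrightarrow> L) (at (1,n) within FR)"
    using wd_lim[OF wd nin] by blast
  let ?F = "at (1,n) within FR"
  have Gv: "G 1 n = -2 * p 1 n \<and> p 1 n \<noteq> 0"
  proof (cases "R < 1")
    case True
    hence "n > l 1" using assms by simp
    hence "b1*(n - l 1) > 0" using B1 by simp
    thus ?thesis using True p1 G1 \<open>n > l 1\<close> B1 by auto
  next
    case False
    hence "R > 1" using R1 by simp
    hence "n < l 1" using assms by (simp add: mult_less_cancel_left)
    hence "b1*(n - l 1) < 0" using B1 by (simp add: mult_pos_neg)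
    thus ?thesis using \<open>R > 1\<close> p1 G1 \<open>n < l 1\<close> B1 by auto
  qed
  have tG: "((\<lambda>z. G (fst z) (snd z)) \<longlongrightarrow> G 1 n) ?F"
    using cont_G[of "(1,n)"] unfolding isCont_def by (auto intro: tendsto_within_subset)
  have tf: "((\<lambda>z. fst z) \<longlongrightarrow> 1) ?F"
    using tendsto_fst[OF tendsto_ident_at[of "(1,n)" FR]] by simp
  have t1: "((\<lambda>z. (1 - fst z) * H (fst z) (snd z)) \<longlongrightarrow> (1 - 1) * L) ?F"
    by (intro tendsto_intros tf tH)
  have t2: "((\<lambda>z. (1-R)/R - 2*(1-R)^2*fst z*(1 - fst z)/(R * G (fst z) (snd z))) \<longlongrightarrow>
      (1-R)/R - 2*(1-R)^2*1*(1 - 1)/(R * G 1 n)) ?F"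
    using Gv R0 by (intro tendsto_intros tG tf) auto
  have "\<forall>\<^sub>F z in ?F. (1 - fst z) * H (fst z) (snd z) =
      (1-R)/R - 2*(1-R)^2*fst z*(1 - fst z)/(R * G (fst z) (snd z))"
    using ev_inFR
  proof eventually_elim
    case (elim z)
    hence "G (fst z) (snd z) \<noteq> 0" "fst z \<noteq> 1" by (cases z, simp add: Freg_mem)+
    thus ?case unfolding Hf_def using R0 by (simp add: field_simps)
  qed
  from Lim_transform_eventually[OF t1 this] have t3: "((\<lambda>z. (1-R)/R - 2*(1-R)^2*fst z*(1 - fst z)/(R * G (fst z) (snd z))) \<longlongrightarrow> (1 - 1) * L) ?F" .
  have "(1 - 1) * L = (1-R)/R - 2*(1-R)^2*1*(1 - 1)/(R * G 1 n)" using tendsto_unique[OF nb t3 t2] .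
  thus False using R0 R1 by simp
qed

lemma path_flim: assumes "\<forall>\<^sub>F t in at_right (0::real). (q+t, n+t) \<in> FR"
  shows "filterlim (\<lambda>t. (q+t, n+t)) (at (q,n) within FR) (at_right (0::real))"
proof (rule filterlim_at_withinI[OF path_tendsto])
  show "\<forall>\<^sub>F t in at_right 0. (q+t, n+t) \<in> FR - {(q,n)}"
    using assms eventually_at_right_less[of "0::real"] by eventually_elim auto
qed

lemma NW3: assumes "l 1 \<ge> 0"
  shows "\<not> F_wd R b1 b2 b3 1 (l 1)"
proof
  assume wd: "F_wd R b1 b2 b3 1 (l 1)"
  define w where "w = 1 - R"
  define g where "g = sgn (1-R)"
  define c where "c = b2 - 1"
  define \<beta> where "\<beta> = b1 + w*(b3 - 2*R)"
  define \<rho> where "\<rho> = sqrt (\<beta>^2 + 4*R^2*w^2*c)"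
  define \<kappa> where "\<kappa> = -2*w - \<beta> - g*\<rho>"
  define L1 where "L1 = l 1"
  have w0: "w \<noteq> 0" using R1 w_def by simp
  have c0: "c > 0" using B2 c_def by simp
  have rb: "\<rho> > \<bar>\<beta>\<bar>"
  proof -
    have "4*R^2*w^2*c > 0" using R0 w0 c0 by simp
    hence "sqrt (\<beta>^2) < \<rho>" unfolding \<rho>_def by (intro real_sqrt_less_mono) simp
    thus ?thesis by simp
  qed
  have k0: "\<kappa> \<noteq> 0"
  proof (cases "R < 1")
    case True
    hence g1: "g = 1" and "w > 0" using g_def w_def by simp_all
    thus ?thesis unfolding \<kappa>_def g1 using rb by linarith
  next
    case False
    hence g1: "g = -1" and "w < 0" using g_def w_def R1 by simp_all
    thus ?thesis unfolding \<kappa>_def g1 using rb by linarith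
  qed
  have k2: "\<kappa> + 2*w \<noteq> 0"
  proof (cases "R < 1")
    case True
    hence g1: "g = 1" using g_def by simp
    thus ?thesis unfolding \<kappa>_def g1 using rb by linarith
  next
    case False
    hence g1: "g = -1" using g_def R1 by simp
    thus ?thesis unfolding \<kappa>_def g1 using rb by linarith
  qed
  define \<gamma> where "\<gamma> = -w/R - 2*w^2*(1+0)/(R*(\<kappa> - 2*w^2*0))"
  have "\<gamma> = -(w*(\<kappa>+2*w))/(R*\<kappa>)" unfolding \<gamma>_def using R0 k0
    by (simp add: field_simps power2_eq_square)
  hence gam: "\<gamma> \<noteq> 0" using w0 k2 R0 k0 by simp
  have pt: "\<And>t. p (1+t) (L1+t) = t*\<beta>"
    unfolding phi_alt L1_def l1_eq \<beta>_def w_def mfun_def using B1 by (simp add: field_simps power2_eq_square)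
  have St: "\<And>t. t > 0 \<Longrightarrow> S (1+t) (L1+t) = t*\<rho>"
  proof -
    fix t :: real assume t: "t > 0"
    have "S (1+t) (L1+t) = sqrt (t^2 * (\<beta>^2 + 4*R^2*w^2*c))"
      unfolding Sq_def pt Esq_def w_def c_def by (simp add: algebra_simps power2_eq_square)
    also have "\<dots> = t*\<rho>" unfolding \<rho>_def real_sqrt_mult using t by simp
    finally show "S (1+t) (L1+t) = t*\<rho>" .
  qed
  have Gt: "\<And>t. t > 0 \<Longrightarrow> G (1+t) (L1+t) = t*(\<kappa> - 2*w^2*t)"
  proof -
    fix t :: real assume t: "t > 0"
    show "G (1+t) (L1+t) = t*(\<kappa> - 2*w^2*t)"
      unfolding Oden_eq pt St[OF t] \<kappa>_def g_def w_def
      by (simp add: algebra_simps power2_eq_square)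
  qed
  have tk: "((\<lambda>t. \<kappa> - 2*w^2*t) \<longlongrightarrow> \<kappa> - 2*w^2*0) (at_right (0::real))"
    by (intro tendsto_intros)
  have ek: "\<forall>\<^sub>F t in at_right (0::real). \<kappa> - 2*w^2*t \<noteq> 0" using ev_ne[OF tk, of 0] k0 by simp
  have t1: "((\<lambda>t. 1 + t) \<longlongrightarrow> (1::real)) (at_right (0::real))"
    using tendsto_add[OF tendsto_const[of "1::real"] tendsto_ident_at[of 0]] by simp
  have Qn1: "(1::real) \<noteq> R/(R-1)" using R1 by (auto simp: field_simps)
  have eQ: "\<forall>\<^sub>F t in at_right (0::real). 1 + t \<noteq> R/(R-1)" using ev_ne[OF t1 Qn1] .
  have ein: "\<forall>\<^sub>F t in at_right (0::real). (1+t, L1+t) \<in> FR"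
    using ek eQ eventually_at_right_less[of "0::real"]
  proof eventually_elim
    case (elim t)
    hence "G (1+t) (L1+t) \<noteq> 0" using Gt by simp
    thus ?case using elim assms L1_def by (simp add: Freg_mem)
  qed
  have fl: "filterlim (\<lambda>t. (1+t, L1+t)) (at (1,L1) within FR) (at_right (0::real))"
    using path_flim[OF ein] .
  have nin: "(1,L1) \<notin> FR" by (simp add: Freg_mem)
  obtain L where tH: "((\<lambda>z. H (fst z) (snd z)) \<longlongrightarrow> L) (at (1,L1) within FR)"
    using wd_lim[OF wd[folded L1_def] nin] by blast
  have tHp: "((\<lambda>t. H (1+t) (L1+t)) \<longlongrightarrow> L) (at_right (0::real))"
    using tendsto_compose_filtermap[of "\<lambda>z. H (fst z) (snd z)"] filterlim_compose[OF tH fl] by simp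
  have ta: "((\<lambda>t. t * H (1+t) (L1+t)) \<longlongrightarrow> 0 * L) (at_right (0::real))"
    by (intro tendsto_intros tHp)
  have tb: "((\<lambda>t. -w/R - 2*w^2*(1+t)/(R*(\<kappa> - 2*w^2*t))) \<longlongrightarrow> \<gamma>) (at_right (0::real))"
    unfolding \<gamma>_def using R0 k0 by (intro tendsto_intros) auto
  have "\<forall>\<^sub>F t in at_right (0::real). t * H (1+t) (L1+t) = -w/R - 2*w^2*(1+t)/(R*(\<kappa> - 2*w^2*t))"
    using ek eventually_at_right_less[of "0::real"]
  proof eventually_elim
    case (elim t)
    show ?case unfolding Hf_def Gt[OF elim(2)] w_def[symmetric] using elim R0 by (simp add: field_simps)
  qed
  from Lim_transform_eventually[OF ta this] have "((\<lambda>t. -w/R - 2*w^2*(1+t)/(R*(\<kappa> - 2*w^2*t))) \<longlongrightarrow> 0 * L) (at_right (0::real))" .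
  from tendsto_unique[OF _ this tb] have "0 * L = \<gamma>" by simp
  thus False using gam by simp
qed


lemma WC_ne: "q \<noteq> 1 \<Longrightarrow> WC q n \<noteq> 0"
proof (cases "R < 1")
  case True thus "q \<noteq> 1 \<Longrightarrow> WC q n \<noteq> 0" using Wc_pos_R1[OF True, of q n] by simp
next
  case False hence "R > 1" using R1 by simp
  thus "q \<noteq> 1 \<Longrightarrow> WC q n \<noteq> 0" using Wc_neg_R2[of q n] by simp
qed

lemma H_lin: assumes "q \<noteq> 1" "G q n \<noteq> 0"
  shows "H q n = ((1-R)*(-4*(1-R)*R*(1-q)^2*b1)/(WC q n*R*(1-q)*G q n)) * (n - m q)"
  unfolding H_prod[OF assms] by (simp add: field_simps)

lemma H_zero: assumes "q \<noteq> 1" "G q n \<noteq> 0" shows "H q n = 0 \<longleftrightarrow> n = m q"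
proof -
  have "(1-R)*(-4*(1-R)*R*(1-q)^2*b1)/(WC q n*R*(1-q)*G q n) \<noteq> 0"
    using assms R0 R1 B1 WC_ne[OF assms(1), of n] by simp
  thus ?thesis unfolding H_lin[OF assms] by simp
qed

lemma G_ne_K: assumes "q \<noteq> 1" "GC q n \<noteq> 0" "(1-R)*q+R \<noteq> 0" "n \<noteq> l q"
  shows "G q n \<noteq> 0"
proof
  assume "G q n = 0"
  hence "-4*(1-R)*(1-q)*K q n = 0" using I1[of q n] by simp
  thus False using assms R1 B1 K_eq[OF assms(3), of n] by simp
qed

lemma sA1: assumes "R < 1" "0 < q" "q < 1" "n \<noteq> l q"
  shows "G q n \<noteq> 0 \<and> (\<exists>c0 > 0. H q n = c0 * ((n - m q)/(n - l q)))"
proof -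
  have D: "(1-R)*q+R > 0" using D_pos_R1[OF assms(1)] assms by simp
  have gc: "GC q n > 0" using Gc_pos_R1 assms by simp
  have wc: "WC q n > 0" using Wc_pos_R1 assms by simp
  have G0: "G q n \<noteq> 0" using G_ne_K[of q n] gc D assms by simp
  have "H q n = ((1-R)*GC q n/(((1-R)*q+R)*WC q n)) * ((n - m q)/(n - l q))"
    using H_quot[of q n] assms gc wc D by simp
  moreover have "(1-R)*GC q n/(((1-R)*q+R)*WC q n) > 0" using assms gc wc D by simp
  ultimately show ?thesis using G0 by blast
qed

lemma sB1: assumes "R > 1" "0 < q" "q < 1 \<or> q > R/(R-1)" "n \<noteq> l q"
  shows "G q n \<noteq> 0 \<and> H q n = ((1-R)*GC q n/(((1-R)*q+R)*WC q n)) * ((n - m q)/(n - l q))"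
proof -
  have q1: "q \<noteq> 1" using assms Q_gt1[OF assms(1)] by auto
  have "R/(R-1) > 1" using Q_gt1[OF assms(1)] .
  hence "q < R/(R-1) \<or> q > R/(R-1)" using assms(3) by linarith
  hence D: "(1-R)*q+R \<noteq> 0"
    using D_pos_R2[OF assms(1), of q] D_neg_R2[OF assms(1), of q] by auto
  have gc: "GC q n < 0" using Gc_neg_R2 assms by simp
  have wc: "WC q n < 0" using Wc_neg_R2 assms q1 by simp
  have G0: "G q n \<noteq> 0" using G_ne_K[of q n] gc D assms q1 by simp
  show ?thesis using H_quot[of q n] assms gc wc D G0 q1 by simp
qed

abbreviation "Fe \<equiv> Fext R b1 b2 b3"

lemma l1_m1: "l 1 - m 1 = (1-R)*(b2-1)*R/b1" using l1_eq by simp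

lemma C_neg: assumes "R < 1 \<and> q > 1 \<or> R > 1 \<and> 1 < q \<and> q \<le> R/(R-1)"
  shows "G q n \<noteq> 0 \<and> (1-R)*(-4*(1-R)*R*(1-q)^2*b1)/(WC q n*R*(1-q)*G q n) < 0"
  using assms
proof (elim disjE conjE)
  assume a: "R < 1" "q > 1"
  have G: "G q n < 0" using G_neg_R1 a by simp
  have W: "WC q n > 0" using Wc_pos_R1 a by simp
  have e: "(1-R)*(-4*(1-R)*R*(1-q)^2*b1) = -4*((1-R)*(1-R)*R*(1-q)^2*b1)" by (simp add: algebra_simps)
  have "(1-R)*(1-R)*R*(1-q)^2*b1 > 0" using a R0 B1 by simp
  hence num: "(1-R)*(-4*(1-R)*R*(1-q)^2*b1) < 0" unfolding e by simp
  have "WC q n*R*(1-q) < 0" using W R0 a by (simp add: mult_pos_neg)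
  hence den: "WC q n*R*(1-q)*G q n > 0" using G by (simp add: mult_neg_neg)
  have "(1-R)*(-4*(1-R)*R*(1-q)^2*b1)/(WC q n*R*(1-q)*G q n) < 0" by (rule divide_neg_pos[OF num den])
  moreover have "G q n \<noteq> 0" using G by simp
  ultimately show ?thesis by blast
next
  assume a: "R > 1" "1 < q" "q \<le> R/(R-1)"
  have G: "G q n > 0" using G_pos_R2 a by simp
  have W: "WC q n < 0" using Wc_neg_R2 a by simp
  have "-4*(1-R)*R*(1-q)^2*b1 > 0" using a R0 B1 by (simp add: mult_neg_neg zero_less_mult_iff)
  hence num: "(1-R)*(-4*(1-R)*R*(1-q)^2*b1) < 0" using a by (simp add: mult_neg_pos)
  have "WC q n*R < 0" using W R0 by (simp add: mult_neg_pos)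
  hence "WC q n*R*(1-q) > 0" using a by (simp add: mult_neg_neg)
  hence den: "WC q n*R*(1-q)*G q n > 0" using G by simp
  have "(1-R)*(-4*(1-R)*R*(1-q)^2*b1)/(WC q n*R*(1-q)*G q n) < 0" by (rule divide_neg_pos[OF num den])
  moreover have "G q n \<noteq> 0" using G by simp
  ultimately show ?thesis by blast
qed

lemma signC: assumes "R < 1 \<and> q > 1 \<or> R > 1 \<and> 1 < q \<and> q \<le> R/(R-1)" "n \<ge> 0"
  shows "(n > m q \<longrightarrow> Fe q n < 0) \<and> (n < m q \<longrightarrow> Fe q n > 0)"
proof -
  have q: "q > 1" using assms by auto
  obtain G0 Cn where "G q n \<noteq> 0" "(1-R)*(-4*(1-R)*R*(1-q)^2*b1)/(WC q n*R*(1-q)*G q n) < 0"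
    using C_neg[OF assms(1)] by blast
  moreover have "Fe q n = H q n" using GL[of q n] q assms(2) calculation(1) by simp
  ultimately show ?thesis using H_lin[of q n] q by (auto simp: mult_neg_neg mult_neg_pos)
qed

lemma P4a: assumes "R < 1"
  shows "(\<forall>q n. 0 < q \<and> q < 1 \<and> n \<ge> 0 \<longrightarrow>
         (m q < n \<and> n < l q \<longrightarrow> Fe q n < 0) \<and>
         (n < m q \<or> n > l q \<longrightarrow> Fe q n > 0)) \<and>
      (\<forall>n \<ge> 0.
         (m 1 < n \<and> n < l 1 \<longrightarrow> Fe 1 n < 0) \<and>
         (n < m 1 \<longrightarrow> Fe 1 n > 0) \<and>
         (n \<ge> l 1 \<longrightarrow> \<not> F_wd R b1 b2 b3 1 n)) \<and>
      (\<forall>q n. q > 1 \<and> n \<ge> 0 \<longrightarrow>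
         (n > m q \<longrightarrow> Fe q n < 0) \<and>
         (n < m q \<longrightarrow> Fe q n > 0))"
proof (intro conjI allI impI)
  fix q n :: real assume a: "0 < q \<and> q < 1 \<and> n \<ge> 0"
  have ml: "m q < l q" using P1a[OF assms] a by simp
  {
    assume b: "m q < n \<and> n < l q"
    obtain c0 where "G q n \<noteq> 0" "c0 > 0" "H q n = c0 * ((n - m q)/(n - l q))"
      using sA1[OF assms, of q n] a b by auto
    moreover have "(n - m q)/(n - l q) < 0" using quot_sign[OF ml, of n] b by simp
    moreover have "Fe q n = H q n" using GL[of q n] a calculation(1) by simp
    ultimately show "Fe q n < 0" by (metis mult_pos_neg)
  }
  {
    assume b: "n < m q \<or> n > l q"
    obtain c0 where "G q n \<noteq> 0" "c0 > 0" "H q n = c0 * ((n - m q)/(n - l q))"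
      using sA1[OF assms, of q n] a b ml by auto
    moreover have "(n - m q)/(n - l q) > 0" using quot_sign[OF ml, of n] b by simp
    moreover have "Fe q n = H q n" using GL[of q n] a calculation(1) by simp
    ultimately show "Fe q n > 0" by (metis mult_pos_pos)
  }
next
  fix n :: real assume n0: "n \<ge> 0"
  have lm1: "l 1 - m 1 > 0" unfolding l1_m1 using assms B1 B2 R0 by simp
  {
    assume b: "m 1 < n \<and> n < l 1"
    have "(1-R)*n < (1-R)*l 1" using b assms by simp
    hence "Fe 1 n = - ((1-R) * (n - m 1)) / (l 1 - n)" using Q1 n0 by blast
    moreover have "(1-R) * (n - m 1) > 0" using b assms by simp
    ultimately show "Fe 1 n < 0" using b by (simp add: divide_neg_pos)
  }
  {
    assume b: "n < m 1"
    have "(1-R)*n < (1-R)*l 1" using b assms lm1 by simp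
    hence "Fe 1 n = - ((1-R) * (n - m 1)) / (l 1 - n)" using Q1 n0 by blast
    moreover have "(1-R) * (n - m 1) < 0" using b assms by (simp add: mult_pos_neg)
    moreover have "l 1 - n > 0" using b lm1 by simp
    ultimately have "(1-R) * (n - m 1) / (l 1 - n) < 0" using divide_neg_pos by blast
    thus "Fe 1 n > 0" using \<open>Fe 1 n = _\<close> by simp
  }
  {
    assume b: "n \<ge> l 1"
    show "\<not> F_wd R b1 b2 b3 1 n"
    proof (cases "n = l 1")
      case True thus ?thesis using NW3 n0 by simp
    next
      case False hence "(1-R)*n > (1-R)*l 1" using b assms by simp
      thus ?thesis by (rule NW2)
    qed
  }
next
  fix q n :: real assume a: "q > 1 \<and> n \<ge> 0"
  have "(n > m q \<longrightarrow> Fe q n < 0) \<and> (n < m q \<longrightarrow> Fe q n > 0)" using signC[of q n] a assms by simp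
  thus "n > m q \<Longrightarrow> Fe q n < 0" "n < m q \<Longrightarrow> Fe q n > 0" by auto
qed

lemma quot_sign2:
  fixes a b x :: real
  assumes "a < b"
  shows "(a < x \<and> x < b \<longrightarrow> (x - b)/(x - a) < 0) \<and> (x < a \<or> x > b \<longrightarrow> (x - b)/(x - a) > 0)"
  using assms by (auto simp: divide_less_0_iff zero_less_divide_iff)

lemma ml_Q: assumes "R > 1" "q > R/(R-1)" shows "m q < l q"
proof -
  have Dn: "(1-R)*q+R < 0" using D_neg_R2[OF assms] .
  have q1: "q > 1" using assms Q_gt1[OF assms(1)] by linarith
  have "(1-q)*((1-R)*q+R) > 0" using Dn q1 by (simp add: mult_neg_neg)
  hence gp: "gq R b2 q > 0" unfolding gq_def using B2 R0 mult_pos_pos[of "b2-1" R] by linarith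
  have "(1-R)*q < 0" using assms q1 by (simp add: mult_neg_pos)
  moreover have "b1*((1-R)*q+R) < 0" using B1 Dn by (simp add: mult_pos_neg)
  ultimately have cp: "(1-R)*q/(b1*((1-R)*q+R)) > 0" by (simp add: divide_neg_neg)
  have e: "l q - m q = ((1-R)*q/(b1*((1-R)*q+R))) * gq R b2 q" using lm_g[of q] Dn by simp
  have "l q - m q > 0" unfolding e by (rule mult_pos_pos[OF cp gp])
  thus ?thesis by simp
qed

lemma P4b: assumes "R > 1"
  shows "(\<forall>q n. 0 < q \<and> q < 1 \<and> n \<ge> 0 \<longrightarrow>
         (l q < n \<and> n < m q \<longrightarrow> Fe q n > 0) \<and>
         (n < l q \<or> n > m q \<longrightarrow> Fe q n < 0)) \<and>
      (\<forall>n \<ge> 0.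
         (l 1 < n \<and> n < m 1 \<longrightarrow> Fe 1 n > 0) \<and>
         (n > m 1 \<longrightarrow> Fe 1 n < 0) \<and>
         (n \<le> l 1 \<longrightarrow> \<not> F_wd R b1 b2 b3 1 n)) \<and>
      (\<forall>q n. 1 < q \<and> q \<le> R/(R-1) \<and> n \<ge> 0 \<longrightarrow>
         (n > m q \<longrightarrow> Fe q n < 0) \<and>
         (n < m q \<longrightarrow> Fe q n > 0)) \<and>
      (\<forall>q n. q > R/(R-1) \<and> n \<ge> 0 \<longrightarrow>
         (m q < n \<and> n < l q \<longrightarrow> Fe q n < 0) \<and>
         (n > l q \<or> n < m q \<longrightarrow> Fe q n > 0))"
proof (intro conjI allI impI)
  fix q n :: real assume a: "0 < q \<and> q < 1 \<and> n \<ge> 0"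
  have lm: "l q < m q" using P1b[OF assms] a by simp
  have Dp: "(1-R)*q+R > 0" using D_pos_R2[OF assms, of q] a Q_gt1[OF assms] by simp
  have gc: "GC q n < 0" using Gc_neg_R2[OF assms, of q n] a by simp
  have wc: "WC q n < 0" using Wc_neg_R2[OF assms, of q n] a by simp
  have "(1-R)*GC q n > 0" using gc assms by (simp add: mult_neg_neg)
  moreover have "((1-R)*q+R)*WC q n < 0" using Dp wc by (simp add: mult_pos_neg)
  ultimately have c0: "(1-R)*GC q n/(((1-R)*q+R)*WC q n) < 0" by (simp add: divide_pos_neg)
  {
    assume b: "l q < n \<and> n < m q"
    have "G q n \<noteq> 0" "H q n = ((1-R)*GC q n/(((1-R)*q+R)*WC q n)) * ((n - m q)/(n - l q))"
      using sB1[OF assms, of q n] a b by auto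
    moreover have "(n - m q)/(n - l q) < 0" using quot_sign2[OF lm, of n] b by simp
    moreover have "Fe q n = H q n" using GL[of q n] a calculation(1) by simp
    ultimately show "Fe q n > 0" using c0 by (metis mult_neg_neg)
  }
  {
    assume b: "n < l q \<or> n > m q"
    have "G q n \<noteq> 0" "H q n = ((1-R)*GC q n/(((1-R)*q+R)*WC q n)) * ((n - m q)/(n - l q))"
      using sB1[OF assms, of q n] a b lm by auto
    moreover have "(n - m q)/(n - l q) > 0" using quot_sign2[OF lm, of n] b by simp
    moreover have "Fe q n = H q n" using GL[of q n] a calculation(1) by simp
    ultimately show "Fe q n < 0" using c0 by (metis mult_neg_pos)
  }
next
  fix n :: real assume n0: "n \<ge> 0"
  have lm1: "l 1 - m 1 < 0" unfolding l1_m1 using assms B1 B2 R0 by (simp add: divide_neg_pos mult_neg_pos)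
  {
    assume b: "l 1 < n \<and> n < m 1"
    have "(1-R)*n < (1-R)*l 1" using b assms by (simp add: mult_less_cancel_left)
    hence "Fe 1 n = - ((1-R) * (n - m 1)) / (l 1 - n)" using Q1 n0 by blast
    moreover have "(1-R) * (n - m 1) > 0" using b assms by (simp add: mult_neg_neg)
    moreover have "l 1 - n < 0" using b by simp
    ultimately have "Fe 1 n = (1-R) * (n - m 1) / (n - l 1)" by (simp add: field_simps)
    moreover have "n - l 1 > 0" using b by simp
    ultimately show "Fe 1 n > 0" using \<open>(1-R) * (n - m 1) > 0\<close> by simp
  }
  {
    assume b: "n > m 1"
    have "(1-R)*n < (1-R)*l 1" using b assms lm1 by (simp add: mult_less_cancel_left)
    hence "Fe 1 n = - ((1-R) * (n - m 1)) / (l 1 - n)" using Q1 n0 by blast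
    moreover have "(1-R) * (n - m 1) < 0" using b assms by (simp add: mult_neg_pos)
    moreover have "l 1 - n < 0" using b lm1 by simp
    ultimately have "Fe 1 n = (1-R) * (n - m 1) / (n - l 1)" by (simp add: field_simps)
    moreover have "n - l 1 > 0" using b lm1 by simp
    ultimately show "Fe 1 n < 0" using \<open>(1-R) * (n - m 1) < 0\<close> by (simp add: divide_neg_pos)
  }
  {
    assume b: "n \<le> l 1"
    show "\<not> F_wd R b1 b2 b3 1 n"
    proof (cases "n = l 1")
      case True thus ?thesis using NW3 n0 by simp
    next
      case False hence "(1-R)*n > (1-R)*l 1" using b assms by (simp add: mult_less_cancel_left)
      thus ?thesis by (rule NW2)
    qed
  }
next
  fix q n :: real assume a: "1 < q \<and> q \<le> R/(R-1) \<and> n \<ge> 0"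
  have "(n > m q \<longrightarrow> Fe q n < 0) \<and> (n < m q \<longrightarrow> Fe q n > 0)" using signC[of q n] a assms by simp
  thus "n > m q \<Longrightarrow> Fe q n < 0" "n < m q \<Longrightarrow> Fe q n > 0" by auto
next
  fix q n :: real assume a: "q > R/(R-1) \<and> n \<ge> 0"
  have ml: "m q < l q" using ml_Q[OF assms] a by simp
  have q1: "q > 1" using a Q_gt1[OF assms] by linarith
  have Dn: "(1-R)*q+R < 0" using D_neg_R2[OF assms, of q] a by simp
  have gc: "GC q n < 0" using Gc_neg_R2[OF assms, of q n] a q1 by simp
  have wc: "WC q n < 0" using Wc_neg_R2[OF assms, of q n] q1 by simp
  have "(1-R)*GC q n > 0" using gc assms by (simp add: mult_neg_neg)
  moreover have "((1-R)*q+R)*WC q n > 0" using Dn wc by (simp add: mult_neg_neg)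
  ultimately have c0: "(1-R)*GC q n/(((1-R)*q+R)*WC q n) > 0" by simp
  {
    assume b: "m q < n \<and> n < l q"
    have "G q n \<noteq> 0" "H q n = ((1-R)*GC q n/(((1-R)*q+R)*WC q n)) * ((n - m q)/(n - l q))"
      using sB1[OF assms, of q n] a b q1 by auto
    moreover have "(n - m q)/(n - l q) < 0" using quot_sign[OF ml, of n] b by simp
    moreover have "Fe q n = H q n" using GL[of q n] a q1 calculation(1) by simp
    ultimately show "Fe q n < 0" using c0 by (metis mult_pos_neg)
  }
  {
    assume b: "n > l q \<or> n < m q"
    have "G q n \<noteq> 0" "H q n = ((1-R)*GC q n/(((1-R)*q+R)*WC q n)) * ((n - m q)/(n - l q))"
      using sB1[OF assms, of q n] a b ml q1 by auto
    moreover have "(n - m q)/(n - l q) > 0" using quot_sign[OF ml, of n] b by auto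
    moreover have "Fe q n = H q n" using GL[of q n] a q1 calculation(1) by simp
    ultimately show "Fe q n > 0" using c0 by (metis mult_pos_pos)
  }
qed

lemma P4z: "\<forall>q n. F_wd R b1 b2 b3 q n \<longrightarrow> (Fe q n = 0 \<longleftrightarrow> n = m q)"
proof (intro allI impI)
  fix q n assume wd: "F_wd R b1 b2 b3 q n"
  have q0: "q > 0" and n0: "n \<ge> 0" using wd unfolding F_wd_def by auto
  show "Fe q n = 0 \<longleftrightarrow> n = m q"
  proof (cases "q = 1")
    case True
    have lt: "(1-R)*n < (1-R)*l 1"
    proof (rule ccontr)
      assume "\<not> (1-R)*n < (1-R)*l 1"
      moreover have "(1-R)*n \<noteq> (1-R)*l 1 \<or> n = l 1" using R1 by auto
      ultimately have "(1-R)*n > (1-R)*l 1 \<or> n = l 1" by linarith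
      thus False using NW2[of n] NW3 wd True n0 by auto
    qed
    have e: "Fe 1 n = - ((1-R) * (n - m 1)) / (l 1 - n)" using Q1[OF n0 lt] by blast
    have "l 1 - n \<noteq> 0" using lt by auto
    thus ?thesis unfolding True e using R1 by simp
  next
    case False
    have G0: "G q n \<noteq> 0" using NW1[OF q0 False] wd by auto
    have "Fe q n = H q n" using GL[OF q0 n0 False G0] by simp
    thus ?thesis using H_zero[OF False G0] by simp
  qed
qed

lemma P2: assumes "R > 1" shows "\<forall>n \<ge> 0. F_wd R b1 b2 b3 (R/(R-1)) n"
proof (intro allI impI)
  fix n :: real assume n0: "n \<ge> 0"
  have Q1': "R/(R-1) > 1" using Q_gt1[OF assms] .
  have "G (R/(R-1)) n > 0" using G_pos_R2[OF assms Q1'] by simp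
  thus "F_wd R b1 b2 b3 (R/(R-1)) n" using GL[of "R/(R-1)" n] Q1' n0 by simp
qed

lemma tG1: "((\<lambda>n. G q n) \<longlongrightarrow> G q x) (at x within T)"
proof -
  have "((\<lambda>n. (q, n)) \<longlongrightarrow> (q, x)) (at x within T)" by (intro tendsto_intros)
  from isCont_tendsto_compose[OF cont_G this] show ?thesis by simp
qed

lemma G_at_l: assumes "q \<noteq> 1" "GC q (l q) \<noteq> 0" "(1-R)*q+R \<noteq> 0" shows "G q (l q) = 0"
proof -
  have "K q (l q) = 0" using K_eq[OF assms(3)] by simp
  hence "G q (l q) * GC q (l q) = 0" using I1[of q "l q"] by simp
  thus ?thesis using assms(2) by simp
qed

lemma P3b: assumes "R < 1"
  shows "\<forall>q. 0 < q \<and> q \<le> 1 \<longrightarrow>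
      filterlim (\<lambda>n. Fe q n) at_bot (at (l q) within {n. 0 < n \<and> n < l q})"
proof (intro allI impI)
  fix q :: real assume a: "0 < q \<and> q \<le> 1"
  let ?F = "at (l q) within {n. 0 < n \<and> n < l q}"
  have ein: "\<forall>\<^sub>F n in ?F. 0 < n \<and> n < l q" unfolding eventually_at_filter by simp
  show "filterlim (\<lambda>n. Fe q n) at_bot ?F"
  proof (cases "q = 1")
    case True
    have lm1: "l 1 - m 1 > 0" unfolding l1_m1 using assms B1 B2 R0 by simp
    have e: "\<forall>\<^sub>F n in ?F. (1-R)*(n - m 1) * inverse (n - l 1) = Fe q n"
      using ein
    proof eventually_elim
      case (elim n)
      have "(1-R)*n < (1-R)*l 1" using elim assms True by simp
      hence "Fe 1 n = - ((1-R) * (n - m 1)) / (l 1 - n)" using Q1 elim by auto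
      moreover have "l 1 - n \<noteq> 0" using elim True by simp
      ultimately show ?case using True by (simp add: field_simps)
    qed
    have t1: "((\<lambda>n. (1-R)*(n - m 1)) \<longlongrightarrow> (1-R)*(l q - m 1)) ?F" by (intro tendsto_intros)
    have c: "(1-R)*(l q - m 1) > 0" using lm1 True assms by simp
    have t2: "((\<lambda>n. n - l 1) \<longlongrightarrow> 0) ?F"
      using tendsto_diff[OF tendsto_ident_at[of "l q" "{n. 0 < n \<and> n < l q}"] tendsto_const[of "l 1"]] True by simp
    have e2: "\<forall>\<^sub>F n in ?F. n - l 1 < 0" using ein by eventually_elim (simp add: True)
    have "filterlim (\<lambda>n. (1-R)*(n - m 1) * inverse (n - l 1)) at_bot ?F"
      by (rule filterlim_tendsto_pos_mult_at_bot[OF t1 c filterlim_inverse_at_bot[OF t2 e2]])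
    thus ?thesis using filterlim_cong[OF refl refl e] by simp
  next
    case False
    hence q1: "q < 1" using a by simp
    have D: "(1-R)*q+R > 0" using D_pos_R1[OF assms] a by simp
    have gcp: "\<And>n. GC q n > 0" using Gc_pos_R1[OF assms] a q1 by simp
    have Gl: "G q (l q) = 0" using G_at_l[of q] gcp[of "l q"] q1 D by simp
    have Gpos: "\<forall>\<^sub>F n in ?F. G q n > 0" using ein
    proof eventually_elim
      case (elim n)
      have Kv: "K q n = (b1*((1-R)*q+R))*(n - l q)" using K_eq[of q n] D by simp
      have "b1*((1-R)*q+R) > 0" using D B1 by simp
      hence Kn: "K q n < 0" unfolding Kv using elim by (simp add: mult_pos_neg)
      have "(1-R)*(1-q) > 0" using assms q1 by simp
      hence h1: "-4*((1-R)*(1-q)) < 0" by simp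
      have "(-4*((1-R)*(1-q)))*K q n > 0" by (rule mult_neg_neg[OF h1 Kn])
      hence "-4*(1-R)*(1-q)*K q n > 0" by (simp add: algebra_simps)
      hence "G q n * GC q n > 0" using I1[of q n] by simp
      thus ?case using gcp[of n] by (simp add: zero_less_mult_iff)
    qed
    have e: "\<forall>\<^sub>F n in ?F. (1-R)/(R*(1-q)) + (-2*(1-R)^2*q/R) * inverse (G q n) = Fe q n"
      using ein Gpos
    proof eventually_elim
      case (elim n)
      have "Fe q n = H q n" using GL[of q n] elim a q1 by simp
      thus ?case unfolding Hf_def using elim R0 by (simp add: field_simps)
    qed
    have tG: "((\<lambda>n. G q n) \<longlongrightarrow> 0) ?F" using tG1[of q "l q"] Gl by simp
    have ti: "filterlim (\<lambda>n. inverse (G q n)) at_top ?F" by (rule filterlim_inverse_at_top[OF tG Gpos])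
    have c: "-2*(1-R)^2*q/R < 0" using assms a R0 by (simp add: divide_neg_pos mult_neg_pos)
    have "filterlim (\<lambda>n. (-2*(1-R)^2*q/R) * inverse (G q n)) at_bot ?F"
      by (rule filterlim_tendsto_neg_mult_at_bot[OF tendsto_const c ti])
    hence "filterlim (\<lambda>n. (1-R)/(R*(1-q)) + (-2*(1-R)^2*q/R) * inverse (G q n)) at_bot ?F"
      by (subst filterlim_tendsto_add_at_bot_iff[OF tendsto_const])
    thus ?thesis using filterlim_cong[OF refl refl e] by simp
  qed
qed

lemma P3c: assumes "R > 1"
  shows "\<forall>q. 0 < q \<and> q \<le> 1 \<longrightarrow>
      filterlim (\<lambda>n. Fe q n) at_top (at (l q) within {n. 0 < n \<and> l q < n})"
proof (intro allI impI)
  fix q :: real assume a: "0 < q \<and> q \<le> 1"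
  let ?F = "at (l q) within {n. 0 < n \<and> l q < n}"
  have ein: "\<forall>\<^sub>F n in ?F. 0 < n \<and> l q < n" unfolding eventually_at_filter by simp
  show "filterlim (\<lambda>n. Fe q n) at_top ?F"
  proof (cases "q = 1")
    case True
    have lm1: "l 1 - m 1 < 0" unfolding l1_m1 using assms B1 B2 R0 by (simp add: divide_neg_pos mult_neg_pos)
    have e: "\<forall>\<^sub>F n in ?F. (1-R)*(n - m 1) * inverse (n - l 1) = Fe q n"
      using ein
    proof eventually_elim
      case (elim n)
      have "(1-R)*n < (1-R)*l 1" using elim assms True by (simp add: mult_less_cancel_left)
      hence "Fe 1 n = - ((1-R) * (n - m 1)) / (l 1 - n)" using Q1 elim by auto
      moreover have "l 1 - n \<noteq> 0" using elim True by simp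
      ultimately show ?case using True by (simp add: field_simps)
    qed
    have t1: "((\<lambda>n. (1-R)*(n - m 1)) \<longlongrightarrow> (1-R)*(l q - m 1)) ?F" by (intro tendsto_intros)
    have c: "(1-R)*(l q - m 1) > 0" using lm1 True assms by (simp add: mult_neg_neg)
    have t2: "((\<lambda>n. n - l 1) \<longlongrightarrow> 0) ?F"
      using tendsto_diff[OF tendsto_ident_at[of "l q" "{n. 0 < n \<and> l q < n}"] tendsto_const[of "l 1"]] True by simp
    have e2: "\<forall>\<^sub>F n in ?F. n - l 1 > 0" using ein by eventually_elim (simp add: True)
    have "filterlim (\<lambda>n. (1-R)*(n - m 1) * inverse (n - l 1)) at_top ?F"
      by (rule filterlim_tendsto_pos_mult_at_top[OF t1 c filterlim_inverse_at_top[OF t2 e2]])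
    thus ?thesis using filterlim_cong[OF refl refl e] by simp
  next
    case False
    hence q1: "q < 1" using a by simp
    have D: "(1-R)*q+R > 0" using D_pos_R2[OF assms, of q] a q1 Q_gt1[OF assms] by simp
    have gcn: "\<And>n. GC q n < 0" using Gc_neg_R2[OF assms] a q1 by simp
    have Gl: "G q (l q) = 0" using G_at_l[of q] gcn[of "l q"] q1 D by simp
    have Gneg: "\<forall>\<^sub>F n in ?F. - G q n > 0" using ein
    proof eventually_elim
      case (elim n)
      have Kv: "K q n = (b1*((1-R)*q+R))*(n - l q)" using K_eq[of q n] D by simp
      have "b1*((1-R)*q+R) > 0" using D B1 by simp
      hence Kp: "K q n > 0" unfolding Kv using elim by simp
      have "(1-R)*(1-q) < 0" using assms q1 by (simp add: mult_neg_pos)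
      hence h1: "-4*((1-R)*(1-q)) > 0" by simp
      have "(-4*((1-R)*(1-q)))*K q n > 0" by (rule mult_pos_pos[OF h1 Kp])
      hence "-4*(1-R)*(1-q)*K q n > 0" by (simp add: algebra_simps)
      hence "G q n * GC q n > 0" using I1[of q n] by simp
      thus ?case using gcn[of n] by (simp add: zero_less_mult_iff)
    qed
    have e: "\<forall>\<^sub>F n in ?F. (1-R)/(R*(1-q)) + (2*(1-R)^2*q/R) * inverse (- G q n) = Fe q n"
      using ein Gneg
    proof eventually_elim
      case (elim n)
      have "Fe q n = H q n" using GL[of q n] elim a q1 by simp
      thus ?case unfolding Hf_def using elim R0 by (simp add: field_simps)
    qed
    have tG: "((\<lambda>n. - G q n) \<longlongrightarrow> 0) ?F" using tendsto_minus[OF tG1[of q "l q"]] Gl by simp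
    have ti: "filterlim (\<lambda>n. inverse (- G q n)) at_top ?F" by (rule filterlim_inverse_at_top[OF tG Gneg])
    have c: "2*(1-R)^2*q/R > 0" using assms a R0 by simp
    have "filterlim (\<lambda>n. (2*(1-R)^2*q/R) * inverse (- G q n)) at_top ?F"
      by (rule filterlim_tendsto_pos_mult_at_top[OF tendsto_const c ti])
    hence "filterlim (\<lambda>n. (1-R)/(R*(1-q)) + (2*(1-R)^2*q/R) * inverse (- G q n)) at_top ?F"
      by (rule filterlim_tendsto_add_at_top[OF tendsto_const])
    thus ?thesis using filterlim_cong[OF refl refl e] by simp
  qed
qed

lemma Hval: assumes "q \<noteq> 1" "(1-R)*q+R \<noteq> 0" "G q (l q) \<noteq> 0"
  shows "H q (l q) = - ((1-R) / (R*(1-q))) * (q*((1-R)*q + R) / (((1-R)*q + R)^2 + (b2-1)*R^2) - 1)"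
proof -
  define D where "D = (1-R)*q+R"
  define c where "c = b2 - 1"
  have D0: "D \<noteq> 0" using assms D_def by simp
  have K0: "K q (l q) = 0" using K_eq[OF assms(2)] by simp
  have GC0: "GC q (l q) = 0" using I1[of q "l q"] K0 assms(3) by simp
  have sum: "G q (l q) + GC q (l q) = 2*(2*(1-R)*(1-q)*D - p q (l q))"
    unfolding Oden_eq Gc_def D_def by simp
  have Gv: "G q (l q) = 2*(2*(1-R)*(1-q)*D - p q (l q))" using sum GC0 by simp
  have lm: "l q - m q = (1-R)*q*((1-q)*D + c*R)/(b1*D)" using l_minus_m[OF assms(2)] D_def c_def by simp
  have pv: "p q (l q) = (1-R)*q*((1-q)*D + c*R)/D + (1-R)*R*((1-q)^2 - c)"
    unfolding phi_alt lm c_def[symmetric] using B1 by simp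
  have "2*(1-R)*(1-q)*D - p q (l q) = (2*(1-R)*(1-q)*D^2 - (1-R)*q*((1-q)*D + c*R) - (1-R)*R*D*((1-q)^2 - c))/D"
    unfolding pv using D0 by (simp add: field_simps power2_eq_square)
  also have "\<dots> = (1-R)*(1-q)*(D^2 + c*R^2)/D"
    using alg_Ap[of R q c] unfolding D_def by (simp add: algebra_simps)
  finally have Gv2: "G q (l q) = 2*((1-R)*(1-q)*(D^2 + c*R^2)/D)" using Gv by simp
  have E: "D^2 + c*R^2 > 0" using B2 R0 c_def by (simp add: add_nonneg_pos)
  have "H q (l q) = (1-R)/(R*(1-q)) - 2*(1-R)^2*q/(R * G q (l q))" unfolding Hf_def ..
  also have "\<dots> = -((1-R)/(R*(1-q)))*(q*D/(D^2 + c*R^2) - 1)"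
    by (rule alg_V) (use assms R0 R1 D0 E Gv2 in auto)
  finally show ?thesis unfolding D_def c_def .
qed

lemma P3d: "\<forall>q. ((R < 1 \<and> q > 1) \<or> (R > 1 \<and> 1 < q \<and> q < R/(R-1))) \<longrightarrow>
      ((\<lambda>n. Fe q n) \<longlongrightarrow>
         - ((1-R) / (R*(1-q))) *
           (q*((1-R)*q + R) / (((1-R)*q + R)^2 + (b2-1)*R^2) - 1))
        (at (l q) within {0<..})"
proof (intro allI impI)
  fix q :: real assume a: "(R < 1 \<and> q > 1) \<or> (R > 1 \<and> 1 < q \<and> q < R/(R-1))"
  have q1: "q > 1" using a by auto
  have Gn: "\<And>n. G q n \<noteq> 0"
    using a G_neg_R1[of q] G_pos_R2[of q] by (metis less_irrefl less_le)
  have D: "(1-R)*q+R \<noteq> 0"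
  proof (cases "R < 1")
    case True thus ?thesis using D_pos_R1[of q] q1 by simp
  next
    case False thus ?thesis using D_pos_R2[of q] a by auto
  qed
  have cH: "isCont (\<lambda>z. H (fst z) (snd z)) (q, l q)" using cont_H Gn q1 by simp
  have tq: "((\<lambda>n. (q, n)) \<longlongrightarrow> (q, l q)) (at (l q) within {0<..})" by (intro tendsto_intros)
  have "((\<lambda>n. H q n) \<longlongrightarrow> H q (l q)) (at (l q) within {0<..})"
    using isCont_tendsto_compose[OF cH tq] by simp
  moreover have "\<forall>\<^sub>F n in at (l q) within {0<..}. H q n = Fe q n"
    unfolding eventually_at_filter
    by (intro always_eventually allI impI) (use GL[of q] q1 Gn in auto)
  ultimately have "((\<lambda>n. Fe q n) \<longlongrightarrow> H q (l q)) (at (l q) within {0<..})"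
    by (rule Lim_transform_eventually)
  thus "((\<lambda>n. Fe q n) \<longlongrightarrow> - ((1-R) / (R*(1-q))) *
           (q*((1-R)*q + R) / (((1-R)*q + R)^2 + (b2-1)*R^2) - 1)) (at (l q) within {0<..})"
    using Hval[of q] q1 D Gn by simp
qed

end

theorem lemma5p1:
  fixes R b1 b2 b3 :: real
  assumes hR: "R > 0" "R \<noteq> 1" and hb1: "b1 > 0" and hb2: "b2 > 1" and hb3: "b3 > 0"
  shows
  \<comment> \<open>(1)(a)\<close>
  "(R < 1 \<longrightarrow>
      (\<forall>q. 0 < q \<and> q \<le> 1 \<longrightarrow> ellfun R b1 b2 b3 q > mfun R b1 b2 b3 q) \<and>
      (\<exists>q0 > 1. mfun R b1 b2 b3 q0 = ellfun R b1 b2 b3 q0 \<and>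
         (\<forall>q. 0 < q \<and> q < q0 \<longrightarrow> mfun R b1 b2 b3 q < ellfun R b1 b2 b3 q) \<and>
         (\<forall>q. q > q0 \<longrightarrow> mfun R b1 b2 b3 q > ellfun R b1 b2 b3 q)))
   \<and>
  \<comment> \<open>(1)(b)\<close>
   (R > 1 \<longrightarrow>
      (\<forall>q. 0 < q \<and> q \<le> 1 \<longrightarrow> mfun R b1 b2 b3 q > ellfun R b1 b2 b3 q) \<and>
      (\<forall>q. q > R/(R-1) \<longrightarrow> mfun R b1 b2 b3 q \<noteq> ellfun R b1 b2 b3 q) \<and>
      ((\<forall>q. 1 < q \<and> q < R/(R-1) \<longrightarrow> mfun R b1 b2 b3 q > ellfun R b1 b2 b3 q) \<or>
       (\<exists>q1. 1 < q1 \<and> q1 < R/(R-1) \<and> mfun R b1 b2 b3 q1 = ellfun R b1 b2 b3 q1 \<and>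
          (\<forall>q. 1 < q \<and> q < R/(R-1) \<and> q \<noteq> q1 \<longrightarrow> mfun R b1 b2 b3 q > ellfun R b1 b2 b3 q)) \<or>
       (\<exists>q1 q2. 1 < q1 \<and> q1 < q2 \<and> q2 < R/(R-1) \<and>
          mfun R b1 b2 b3 q1 = ellfun R b1 b2 b3 q1 \<and> mfun R b1 b2 b3 q2 = ellfun R b1 b2 b3 q2 \<and>
          (\<forall>q. 1 < q \<and> q < q1 \<longrightarrow> mfun R b1 b2 b3 q > ellfun R b1 b2 b3 q) \<and>
          (\<forall>q. q1 < q \<and> q < q2 \<longrightarrow> mfun R b1 b2 b3 q < ellfun R b1 b2 b3 q) \<and>
          (\<forall>q. q2 < q \<and> q < R/(R-1) \<longrightarrow> mfun R b1 b2 b3 q > ellfun R b1 b2 b3 q))))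
   \<and>
  \<comment> \<open>(2)\<close>
   (R > 1 \<longrightarrow> (\<forall>n \<ge> 0. F_wd R b1 b2 b3 (R/(R-1)) n))
   \<and>
  \<comment> \<open>(3), first part\<close>
   (\<forall>n > 0. (1-R)*n < (1-R) * ellfun R b1 b2 b3 1 \<longrightarrow>
      F_wd R b1 b2 b3 1 n \<and>
      ((\<lambda>q. Fext R b1 b2 b3 q n) \<longlongrightarrow> Fext R b1 b2 b3 1 n) (at 1) \<and>
      Fext R b1 b2 b3 1 n = - ((1-R) * (n - mfun R b1 b2 b3 1)) / (ellfun R b1 b2 b3 1 - n))
   \<and>
  \<comment> \<open>(3), second part\<close>
   (R < 1 \<longrightarrow> (\<forall>q. 0 < q \<and> q \<le> 1 \<longrightarrow>
      filterlim (\<lambda>n. Fext R b1 b2 b3 q n) at_bot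
        (at (ellfun R b1 b2 b3 q) within {n. 0 < n \<and> n < ellfun R b1 b2 b3 q})))
   \<and>
   (R > 1 \<longrightarrow> (\<forall>q. 0 < q \<and> q \<le> 1 \<longrightarrow>
      filterlim (\<lambda>n. Fext R b1 b2 b3 q n) at_top
        (at (ellfun R b1 b2 b3 q) within {n. 0 < n \<and> ellfun R b1 b2 b3 q < n})))
   \<and>
  \<comment> \<open>(3), third part\<close>
   (\<forall>q. ((R < 1 \<and> q > 1) \<or> (R > 1 \<and> 1 < q \<and> q < R/(R-1))) \<longrightarrow>
      ((\<lambda>n. Fext R b1 b2 b3 q n) \<longlongrightarrow>
         - ((1-R) / (R*(1-q))) *
           (q*((1-R)*q + R) / (((1-R)*q + R)^2 + (b2-1)*R^2) - 1))
        (at (ellfun R b1 b2 b3 q) within {0<..}))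
   \<and>
  \<comment> \<open>(4), zeros\<close>
   (\<forall>q n. F_wd R b1 b2 b3 q n \<longrightarrow> (Fext R b1 b2 b3 q n = 0 \<longleftrightarrow> n = mfun R b1 b2 b3 q))
   \<and>
  \<comment> \<open>(4)(a)\<close>
   (R < 1 \<longrightarrow>
      (\<forall>q n. 0 < q \<and> q < 1 \<and> n \<ge> 0 \<longrightarrow>
         (mfun R b1 b2 b3 q < n \<and> n < ellfun R b1 b2 b3 q \<longrightarrow> Fext R b1 b2 b3 q n < 0) \<and>
         (n < mfun R b1 b2 b3 q \<or> n > ellfun R b1 b2 b3 q \<longrightarrow> Fext R b1 b2 b3 q n > 0)) \<and>
      (\<forall>n \<ge> 0.
         (mfun R b1 b2 b3 1 < n \<and> n < ellfun R b1 b2 b3 1 \<longrightarrow> Fext R b1 b2 b3 1 n < 0) \<and>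
         (n < mfun R b1 b2 b3 1 \<longrightarrow> Fext R b1 b2 b3 1 n > 0) \<and>
         (n \<ge> ellfun R b1 b2 b3 1 \<longrightarrow> \<not> F_wd R b1 b2 b3 1 n)) \<and>
      (\<forall>q n. q > 1 \<and> n \<ge> 0 \<longrightarrow>
         (n > mfun R b1 b2 b3 q \<longrightarrow> Fext R b1 b2 b3 q n < 0) \<and>
         (n < mfun R b1 b2 b3 q \<longrightarrow> Fext R b1 b2 b3 q n > 0)))
   \<and>
  \<comment> \<open>(4)(b)\<close>
   (R > 1 \<longrightarrow>
      (\<forall>q n. 0 < q \<and> q < 1 \<and> n \<ge> 0 \<longrightarrow>
         (ellfun R b1 b2 b3 q < n \<and> n < mfun R b1 b2 b3 q \<longrightarrow> Fext R b1 b2 b3 q n > 0) \<and>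
         (n < ellfun R b1 b2 b3 q \<or> n > mfun R b1 b2 b3 q \<longrightarrow> Fext R b1 b2 b3 q n < 0)) \<and>
      (\<forall>n \<ge> 0.
         (ellfun R b1 b2 b3 1 < n \<and> n < mfun R b1 b2 b3 1 \<longrightarrow> Fext R b1 b2 b3 1 n > 0) \<and>
         (n > mfun R b1 b2 b3 1 \<longrightarrow> Fext R b1 b2 b3 1 n < 0) \<and>
         (n \<le> ellfun R b1 b2 b3 1 \<longrightarrow> \<not> F_wd R b1 b2 b3 1 n)) \<and>
      (\<forall>q n. 1 < q \<and> q \<le> R/(R-1) \<and> n \<ge> 0 \<longrightarrow>
         (n > mfun R b1 b2 b3 q \<longrightarrow> Fext R b1 b2 b3 q n < 0) \<and>
         (n < mfun R b1 b2 b3 q \<longrightarrow> Fext R b1 b2 b3 q n > 0)) \<and>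
      (\<forall>q n. q > R/(R-1) \<and> n \<ge> 0 \<longrightarrow>
         (mfun R b1 b2 b3 q < n \<and> n < ellfun R b1 b2 b3 q \<longrightarrow> Fext R b1 b2 b3 q n < 0) \<and>
         (n > ellfun R b1 b2 b3 q \<or> n < mfun R b1 b2 b3 q \<longrightarrow> Fext R b1 b2 b3 q n > 0)))"
  proof -
  interpret prm R b1 b2 b3 using assms by unfold_locales
  show ?thesis
    apply (intro conjI)
    subgoal using P1a by blast
    subgoal using P1b by blast
    subgoal using P2 by blast
    subgoal by (intro allI impI) (rule Q1, auto)
    subgoal using P3b by blast
    subgoal using P3c by blast
    subgoal using P3d by blast
    subgoal using P4z by blast
    subgoal using P4a by blast
    subgoal using P4b by blast
    done
qed

end
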